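(* Let $R\in\mathcal C_{K_0}$ and write $R=X^\dagger QX$ with $Q,X\in\mathcal A'_G$, $Q\ge0$, $\operatorname{Rng}(X)=\operatorname{Supp}(Q)$. Then an operator $T$ on $\mathcal K\otimes\mathcal H$ is a perturbation of $R$ in $\mathcal C_{K_0}$ if and only if $T$ is a Hermitian element of $\mathcal A'_G$ with $\operatorname{Tr}_{\mathcal K}[T]=0$ and $T=X^\dagger OX$ for some nonzero Hermitian $O\in\mathcal A'_G$ with $\operatorname{Supp}(O)\subseteq\operatorname{Rng}(X)$. Writing $Q=\bigoplus_k(I_{\mathcal H_k}\otimes Q_k)$ and $X=\bigoplus_k(I_{\mathcal H_k}\otimes X_k)$, such $O$ has the form $O=\bigoplus_k(I_{\mathcal H_k}\otimes O_k)$ with $\operatorname{Supp}(O_k)\subseteq\operatorname{Rng}(X_k)$ for all $k$.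
   Context: Let $\mathcal H,\mathcal K$ be finite-dimensional Hilbert spaces and $g\mapsto U_g$, $g\mapsto V_g$ unitary representations of a group $G$ on $\mathcal H$ and $\mathcal K$. $U_g^*$ is the complex conjugate in a fixed orthonormal basis. Decompose $\mathcal K\otimes\mathcal H=\bigoplus_k(\mathcal H_k\otimes\mathbb C^{m_k})$ according to the equivalence classes $k$ of irreducible components of $V_g\otimes U_g^*$ (irreducible space $\mathcal H_k$, multiplicity $m_k$). The commutant $\mathcal A'_G$ of $\{V_g\otimes U_g^*\}$ consists of the operators $\bigoplus_k(I_{\mathcal H_k}\otimes M_k)$, $M_k\in\mathcal B(\mathbb C^{m_k})$. CP maps (quantum operations) $\mathcal M$ covariant in the sense $\mathcal M^*(U_g\rho U_g^\dagger)=V_g\mathcal M^*(\rho)V_g^\dagger$ correspond bijectively to operators $R\ge0$ in $\mathcal A'_G$ via $R=(\mathcal M^*\otimes\mathcal I)(|I\rangle\langle I|)$, $|I\rangle=\sum_n|n\rangle\otimes|n\rangle$. Fix an operator $K_0$ on $\mathcal H$ with $0\le K_0\le I_{\mathcal H}$ and let $\mathcal C_{K_0}=\{R\in\mathcal A'_G: R\ge0,\ \operatorname{Tr}_{\mathcal K}[R]=K_0\}$, a convex set. A nonzero $T$ is a perturbation of $R\in\mathcal C_{K_0}$ if $R\pm tT\in\mathcal C_{K_0}$ for some $t>0$; $R$ is extremal iff it has no perturbation. $\operatorname{Supp}(O)=\operatorname{Ker}(O)^\perp$, $\operatorname{Rng}$ denotes range. *)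

theory Defs
  imports "HOL-Algebra.Group" "Jordan_Normal_Form.Jordan_Normal_Form" "Jordan_Normal_Form.Schur_Decomposition"
begin

text \<open>Finite-dimensional Hilbert spaces are modelled as coordinate spaces
  (complex vectors of fixed dimension), operators as complex square matrices.
  Tensor products are Kronecker products; on K (x) H the index (i,n) with
  i < dK, n < dH is encoded as i * dH + n.\<close>

definition kron :: "complex mat \<Rightarrow> complex mat \<Rightarrow> complex mat" where
  "kron A B = mat (dim_row A * dim_row B) (dim_col A * dim_col B)
     (\<lambda>(r, c). A $$ (r div dim_row B, c div dim_col B) * B $$ (r mod dim_row B, c mod dim_col B))"

definition cconj :: "complex mat \<Rightarrow> complex mat" where
  "cconj A = map_mat cnj A"

abbreviation adj :: "complex mat \<Rightarrow> complex mat" where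
  "adj A \<equiv> mat_adjoint A"

definition hermitian_mat :: "nat \<Rightarrow> complex mat \<Rightarrow> bool" where
  "hermitian_mat n A \<longleftrightarrow> A \<in> carrier_mat n n \<and> adj A = A"

definition unitary_mat :: "nat \<Rightarrow> complex mat \<Rightarrow> bool" where
  "unitary_mat n A \<longleftrightarrow> A \<in> carrier_mat n n \<and> adj A * A = 1\<^sub>m n \<and> A * adj A = 1\<^sub>m n"

definition psd :: "nat \<Rightarrow> complex mat \<Rightarrow> bool" where
  "psd n A \<longleftrightarrow> hermitian_mat n A \<and> (\<forall>v \<in> carrier_vec n. 0 \<le> Re (scalar_prod (A *\<^sub>v v) (conjugate v)))"

definition unitary_rep :: "('g, 'b) monoid_scheme \<Rightarrow> nat \<Rightarrow> ('g \<Rightarrow> complex mat) \<Rightarrow> bool" where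
  "unitary_rep G n U \<longleftrightarrow>
     (\<forall>g \<in> carrier G. unitary_mat n (U g)) \<and>
     (\<forall>g \<in> carrier G. \<forall>h \<in> carrier G. U (g \<otimes>\<^bsub>G\<^esub> h) = U g * U h)"

definition commutant :: "('g, 'b) monoid_scheme \<Rightarrow> nat \<Rightarrow> nat \<Rightarrow> ('g \<Rightarrow> complex mat)
    \<Rightarrow> ('g \<Rightarrow> complex mat) \<Rightarrow> complex mat set" where
  "commutant G dK dH V U = {R \<in> carrier_mat (dK * dH) (dK * dH).
     \<forall>g \<in> carrier G. kron (V g) (cconj (U g)) * R = R * kron (V g) (cconj (U g))}"

definition ptrace_K :: "nat \<Rightarrow> nat \<Rightarrow> complex mat \<Rightarrow> complex mat" where
  "ptrace_K dK dH R = mat dH dH (\<lambda>(n, n'). \<Sum>i<dK. R $$ (i * dH + n, i * dH + n'))"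

definition C_set :: "('g, 'b) monoid_scheme \<Rightarrow> nat \<Rightarrow> nat \<Rightarrow> ('g \<Rightarrow> complex mat)
    \<Rightarrow> ('g \<Rightarrow> complex mat) \<Rightarrow> complex mat \<Rightarrow> complex mat set" where
  "C_set G dK dH V U K0 = {R \<in> commutant G dK dH V U. psd (dK * dH) R \<and> ptrace_K dK dH R = K0}"

definition perturbation :: "complex mat set \<Rightarrow> complex mat \<Rightarrow> complex mat \<Rightarrow> bool" where
  "perturbation C R T \<longleftrightarrow> T \<noteq> 0\<^sub>m (dim_row T) (dim_col T) \<and>
     (\<exists>t::real. t > 0 \<and> R + complex_of_real t \<cdot>\<^sub>m T \<in> C \<and> R - complex_of_real t \<cdot>\<^sub>m T \<in> C)"

definition ker_mat :: "nat \<Rightarrow> complex mat \<Rightarrow> complex vec set" where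
  "ker_mat n A = {v \<in> carrier_vec n. A *\<^sub>v v = 0\<^sub>v (dim_row A)}"

definition supp_mat :: "nat \<Rightarrow> complex mat \<Rightarrow> complex vec set" where
  "supp_mat n A = {w \<in> carrier_vec n. \<forall>v \<in> ker_mat n A. scalar_prod w (conjugate v) = 0}"

definition rng_mat :: "nat \<Rightarrow> complex mat \<Rightarrow> complex vec set" where
  "rng_mat n A = {A *\<^sub>v v | v. v \<in> carrier_vec n}"

definition subspace_vec :: "nat \<Rightarrow> complex vec set \<Rightarrow> bool" where
  "subspace_vec n S \<longleftrightarrow> S \<subseteq> carrier_vec n \<and> 0\<^sub>v n \<in> S \<and>
     (\<forall>v \<in> S. \<forall>w \<in> S. v + w \<in> S) \<and> (\<forall>c. \<forall>v \<in> S. c \<cdot>\<^sub>v v \<in> S)"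

definition irreducible_rep :: "('g, 'b) monoid_scheme \<Rightarrow> nat \<Rightarrow> ('g \<Rightarrow> complex mat) \<Rightarrow> bool" where
  "irreducible_rep G n P \<longleftrightarrow> n > 0 \<and> unitary_rep G n P \<and>
     (\<forall>S. subspace_vec n S \<and> (\<forall>g \<in> carrier G. \<forall>v \<in> S. P g *\<^sub>v v \<in> S)
        \<longrightarrow> S = {0\<^sub>v n} \<or> S = carrier_vec n)"

definition equivalent_rep :: "('g, 'b) monoid_scheme \<Rightarrow> nat \<Rightarrow> ('g \<Rightarrow> complex mat)
    \<Rightarrow> nat \<Rightarrow> ('g \<Rightarrow> complex mat) \<Rightarrow> bool" where
  "equivalent_rep G n P m P' \<longleftrightarrow> n = m \<and>
     (\<exists>M. unitary_mat n M \<and> (\<forall>g \<in> carrier G. P' g = adj M * P g * M))"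

text \<open>Block operator (+)_k (I_{H_k} (x) M_k) in the decomposed basis.\<close>
definition block_op :: "nat list \<Rightarrow> complex mat list \<Rightarrow> complex mat" where
  "block_op ds Ms = diag_block_mat (map (\<lambda>k. kron (1\<^sub>m (ds ! k)) (Ms ! k)) [0..<length ds])"

end

theory Submission
  imports Defs
begin

lemma adj_dims[simp]: "dim_row (adj A) = dim_col A" "dim_col (adj A) = dim_row A"
  unfolding mat_adjoint_def by auto

lemma adj_index[simp]: "i < dim_col A \<Longrightarrow> j < dim_row A \<Longrightarrow> adj A $$ (i,j) = cnj (A $$ (j,i))"
  unfolding mat_adjoint_def by (auto simp: mat_of_rows_def)

lemma adj_carrier[simp,intro]: "A \<in> carrier_mat n m \<Longrightarrow> adj A \<in> carrier_mat m n"
  unfolding carrier_mat_def by auto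

lemma adj_adj[simp]: "adj (adj A) = A"
  by (rule eq_matI, auto)

lemma adj_mult: assumes "A \<in> carrier_mat n m" "B \<in> carrier_mat m k"
  shows "adj (A * B) = adj B * adj A"
proof (rule eq_matI)
  fix i j assume i: "i < dim_row (adj B * adj A)" and j: "j < dim_col (adj B * adj A)"
  have "adj (A * B) $$ (i,j) = cnj (\<Sum>l<m. A $$ (j,l) * B $$ (l,i))"
    using assms i j by (simp add: scalar_prod_def lessThan_atLeast0)
  also have "\<dots> = (\<Sum>l<m. adj B $$ (i,l) * adj A $$ (l,j))"
    using assms i j by (simp add: cnj_sum mult.commute)
  also have "\<dots> = (adj B * adj A) $$ (i,j)"
    using assms i j by (simp add: scalar_prod_def lessThan_atLeast0)
  finally show "adj (A * B) $$ (i,j) = (adj B * adj A) $$ (i,j)" .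
qed (use assms in auto)

lemma adj_add: assumes "A \<in> carrier_mat n m" "B \<in> carrier_mat n m"
  shows "adj (A + B) = adj A + adj B"
  using assms by (intro eq_matI) auto

lemma adj_minus: assumes "A \<in> carrier_mat n m" "B \<in> carrier_mat n m"
  shows "adj (A - B) = adj A - adj B"
  using assms by (intro eq_matI) auto

lemma adj_smult: "adj (c \<cdot>\<^sub>m A) = cnj c \<cdot>\<^sub>m adj A"
  by (intro eq_matI) auto

lemma adj_one[simp]: "adj (1\<^sub>m n) = 1\<^sub>m n"
  by (intro eq_matI) auto

lemma adj_zero[simp]: "adj (0\<^sub>m n m) = 0\<^sub>m m n"
  by (intro eq_matI) auto

lemma ip_adj: assumes A: "A \<in> carrier_mat n m" and v: "v \<in> carrier_vec m" and w: "w \<in> carrier_vec n"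
  shows "(A *\<^sub>v v) \<bullet>c w = v \<bullet>c (adj A *\<^sub>v w)"
proof -
  have "(A *\<^sub>v v) \<bullet>c w = (\<Sum>i<n. (\<Sum>j<m. A $$ (i,j) * v $ j) * cnj (w $ i))"
    using A v w by (auto simp: scalar_prod_def mult_mat_vec_def row_def lessThan_atLeast0)
  also have "\<dots> = (\<Sum>i<n. \<Sum>j<m. A $$ (i,j) * v $ j * cnj (w $ i))"
    by (simp add: sum_distrib_right)
  also have "\<dots> = (\<Sum>j<m. \<Sum>i<n. A $$ (i,j) * v $ j * cnj (w $ i))"
    by (rule sum.swap)
  also have "\<dots> = (\<Sum>j<m. v $ j * cnj (\<Sum>i<n. cnj (A $$ (i,j)) * w $ i))"
    by (simp add: sum_distrib_left cnj_sum mult.commute mult.left_commute)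
  also have "\<dots> = v \<bullet>c (adj A *\<^sub>v w)"
    using A v w by (auto simp: scalar_prod_def mult_mat_vec_def row_def lessThan_atLeast0 intro!: sum.cong)
  finally show ?thesis .
qed


lemma ip_add_l: "v1 \<in> carrier_vec n \<Longrightarrow> v2 \<in> carrier_vec n \<Longrightarrow> w \<in> carrier_vec n \<Longrightarrow>
  (v1 + v2) \<bullet>c w = v1 \<bullet>c w + v2 \<bullet>c w"
  by (rule add_scalar_prod_distrib) auto

lemma ip_minus_l: "v1 \<in> carrier_vec n \<Longrightarrow> v2 \<in> carrier_vec n \<Longrightarrow> w \<in> carrier_vec n \<Longrightarrow>
  (v1 - v2) \<bullet>c w = v1 \<bullet>c w - v2 \<bullet>c w"
  by (rule minus_scalar_prod_distrib) auto

lemma ip_smult_l: "v \<in> carrier_vec n \<Longrightarrow> w \<in> carrier_vec n \<Longrightarrow> (a \<cdot>\<^sub>v v) \<bullet>c w = a * (v \<bullet>c w)"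
  by (rule smult_scalar_prod_distrib) auto

lemma ip_swap: "(v :: complex vec) \<in> carrier_vec n \<Longrightarrow> w \<in> carrier_vec n \<Longrightarrow> w \<bullet>c v = cnj (v \<bullet>c w)"
  by (auto simp: scalar_prod_def cnj_sum intro!: sum.cong)

lemma ip_add_r: "(v :: complex vec) \<in> carrier_vec n \<Longrightarrow> w1 \<in> carrier_vec n \<Longrightarrow> w2 \<in> carrier_vec n \<Longrightarrow>
  v \<bullet>c (w1 + w2) = v \<bullet>c w1 + v \<bullet>c w2"
  by (auto simp: scalar_prod_def sum.distrib distrib_left)

lemma ip_minus_r: "(v :: complex vec) \<in> carrier_vec n \<Longrightarrow> w1 \<in> carrier_vec n \<Longrightarrow> w2 \<in> carrier_vec n \<Longrightarrow>
  v \<bullet>c (w1 - w2) = v \<bullet>c w1 - v \<bullet>c w2"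
  by (auto simp: scalar_prod_def sum_subtractf right_diff_distrib)

lemma ip_smult_r: "(v :: complex vec) \<in> carrier_vec n \<Longrightarrow> w \<in> carrier_vec n \<Longrightarrow> v \<bullet>c (a \<cdot>\<^sub>v w) = cnj a * (v \<bullet>c w)"
  by (auto simp: scalar_prod_def sum_distrib_left algebra_simps)

lemma ip_self_real: "(v :: complex vec) \<bullet>c v = complex_of_real (Re (v \<bullet>c v))"
  using conjugate_square_ge_0_vec[of v] by (simp add: complex_eq_iff less_eq_complex_def)

lemma ip_self_ge0: "0 \<le> Re ((v :: complex vec) \<bullet>c v)"
  using conjugate_square_ge_0_vec[of v] by (simp add: less_eq_complex_def)

lemma ip_self_zero: "(v :: complex vec) \<in> carrier_vec n \<Longrightarrow> Re (v \<bullet>c v) = 0 \<Longrightarrow> v = 0\<^sub>v n"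
  using ip_self_real[of v] conjugate_square_eq_0_vec[of v n] by simp

lemma quad_lemma:
  fixes p q r :: real
  assumes all: "\<And>s. 0 \<le> p - 2 * s * q + s^2 * r" and r: "0 \<le> r"
  shows "q^2 \<le> p * r"
proof (cases "r = 0")
  case True
  have p: "0 \<le> p" using all[of 0] by simp
  have "q = 0"
  proof (rule ccontr)
    assume q: "q \<noteq> 0"
    have "0 \<le> p - 2 * ((p+1)/(2*q)) * q + ((p+1)/(2*q))^2 * r" by (rule all)
    also have "\<dots> = -1" using q True by (simp add: field_simps)
    finally show False by simp
  qed
  thus ?thesis using True by simp
next
  case False
  hence r: "r > 0" using r by simp
  have "0 \<le> p - 2 * (q/r) * q + (q/r)^2 * r" by (rule all)
  also have "\<dots> = p - q^2 / r" using r by (simp add: field_simps power2_eq_square)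
  finally have "q^2 / r \<le> p" by simp
  thus ?thesis using r by (simp add: field_simps)
qed

lemma herm_quad_expand:
  assumes A: "hermitian_mat n A" and u: "u \<in> carrier_vec n" and w: "w \<in> carrier_vec n"
  shows "Re ((A *\<^sub>v (u - complex_of_real s \<cdot>\<^sub>v w)) \<bullet>c (u - complex_of_real s \<cdot>\<^sub>v w))
     = Re ((A *\<^sub>v u) \<bullet>c u) - 2 * s * Re ((A *\<^sub>v u) \<bullet>c w) + s^2 * Re ((A *\<^sub>v w) \<bullet>c w)"
proof -
  have Ac: "A \<in> carrier_mat n n" and Aa: "adj A = A" using A unfolding hermitian_mat_def by auto
  let ?c = "complex_of_real s"
  have sw: "?c \<cdot>\<^sub>v w \<in> carrier_vec n" using w by simp
  have Au: "A *\<^sub>v u \<in> carrier_vec n" and Aw: "A *\<^sub>v w \<in> carrier_vec n" using Ac u w by auto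
  have e1: "A *\<^sub>v (u - ?c \<cdot>\<^sub>v w) = A *\<^sub>v u - ?c \<cdot>\<^sub>v (A *\<^sub>v w)"
    using Ac u w by (simp add: mult_minus_distrib_mat_vec mult_mat_vec)
  have "(A *\<^sub>v (u - ?c \<cdot>\<^sub>v w)) \<bullet>c (u - ?c \<cdot>\<^sub>v w)
     = (A *\<^sub>v u) \<bullet>c u - ?c * ((A *\<^sub>v u) \<bullet>c w) - ?c * ((A *\<^sub>v w) \<bullet>c u) + ?c * ?c * ((A *\<^sub>v w) \<bullet>c w)"
    unfolding e1
    using u w Au Aw sw
    by (simp add: ip_minus_l[of _ n] ip_minus_r[of _ n] ip_smult_l[of _ n] ip_smult_r[of _ n] algebra_simps)
  moreover have "(A *\<^sub>v w) \<bullet>c u = cnj ((A *\<^sub>v u) \<bullet>c w)"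
  proof -
    have "(A *\<^sub>v w) \<bullet>c u = w \<bullet>c (A *\<^sub>v u)" using ip_adj[OF Ac w u] Aa by simp
    also have "\<dots> = cnj ((A *\<^sub>v u) \<bullet>c w)" using ip_swap[OF Au w] by simp
    finally show ?thesis .
  qed
  ultimately show ?thesis by (simp add: power2_eq_square)
qed

lemma psd_quad:
  assumes A: "psd n A" and u: "u \<in> carrier_vec n" and w: "w \<in> carrier_vec n"
  shows "(Re ((A *\<^sub>v u) \<bullet>c w))^2 \<le> Re ((A *\<^sub>v u) \<bullet>c u) * Re ((A *\<^sub>v w) \<bullet>c w)"
proof (rule quad_lemma)
  fix s :: real
  have "u - complex_of_real s \<cdot>\<^sub>v w \<in> carrier_vec n" using u w by simp
  hence "0 \<le> Re ((A *\<^sub>v (u - complex_of_real s \<cdot>\<^sub>v w)) \<bullet>c (u - complex_of_real s \<cdot>\<^sub>v w))"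
    using A unfolding psd_def by blast
  thus "0 \<le> Re ((A *\<^sub>v u) \<bullet>c u) - 2 * s * Re ((A *\<^sub>v u) \<bullet>c w) + s\<^sup>2 * Re ((A *\<^sub>v w) \<bullet>c w)"
    using herm_quad_expand[of n A u w s] A u w unfolding psd_def by simp
next
  show "0 \<le> Re ((A *\<^sub>v w) \<bullet>c w)" using A w unfolding psd_def by blast
qed

lemma psd_ker:
  assumes A: "psd n A" and v: "v \<in> carrier_vec n" and z: "Re ((A *\<^sub>v v) \<bullet>c v) = 0"
  shows "A *\<^sub>v v = 0\<^sub>v n"
proof -
  have Ac: "A \<in> carrier_mat n n" using A unfolding psd_def hermitian_mat_def by auto
  have Av: "A *\<^sub>v v \<in> carrier_vec n" using Ac v by auto
  from psd_quad[OF A v Av] z have "(Re ((A *\<^sub>v v) \<bullet>c (A *\<^sub>v v)))^2 \<le> 0" by simp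
  hence "Re ((A *\<^sub>v v) \<bullet>c (A *\<^sub>v v)) = 0" by simp
  thus ?thesis using ip_self_zero[OF Av] by simp
qed


lemma zero_mat_mult_vec[simp]: "v \<in> carrier_vec m \<Longrightarrow> 0\<^sub>m n m *\<^sub>v v = 0\<^sub>v n"
  by (rule eq_vecI) (auto simp: scalar_prod_def)

lemma mat_eq_vecI:
  fixes A B :: "complex mat"
  assumes A: "A \<in> carrier_mat n m" and B: "B \<in> carrier_mat n m"
    and eq: "\<And>v. v \<in> carrier_vec m \<Longrightarrow> A *\<^sub>v v = B *\<^sub>v v"
  shows "A = B"
proof (rule eq_matI)
  fix i j assume i: "i < dim_row B" and j: "j < dim_col B"
  have "(A *\<^sub>v unit_vec m j) $ i = (B *\<^sub>v unit_vec m j) $ i" using eq[of "unit_vec m j"] by simp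
  thus "A $$ (i,j) = B $$ (i,j)" using A B i j by (simp add: scalar_prod_right_unit)
qed (use A B in auto)

lemma adjM_M_zero:
  fixes M :: "complex mat"
  assumes M: "M \<in> carrier_mat n m" and z: "adj M * M = 0\<^sub>m m m"
  shows "M = 0\<^sub>m n m"
proof (rule mat_eq_vecI[OF M])
  fix v :: "complex vec" assume v: "v \<in> carrier_vec m"
  have Mv: "M *\<^sub>v v \<in> carrier_vec n" using M v by auto
  have "(M *\<^sub>v v) \<bullet>c (M *\<^sub>v v) = v \<bullet>c (adj M *\<^sub>v (M *\<^sub>v v))" by (rule ip_adj[OF M v Mv])
  also have "adj M *\<^sub>v (M *\<^sub>v v) = (adj M * M) *\<^sub>v v" using assoc_mult_mat_vec[of "adj M" m n M m v] M v by simp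
  also have "\<dots> = 0\<^sub>v m" using z v by simp
  finally have "(M *\<^sub>v v) \<bullet>c (M *\<^sub>v v) = 0" using v by simp
  hence "M *\<^sub>v v = 0\<^sub>v n" using conjugate_square_eq_0_vec[OF Mv] by simp
  thus "M *\<^sub>v v = 0\<^sub>m n m *\<^sub>v v" using v by auto
qed auto

lemma herm_sq_zero:
  fixes A C :: "complex mat"
  assumes A: "hermitian_mat n A" and C: "C \<in> carrier_mat n k" and z: "A * A * C = 0\<^sub>m n k"
  shows "A * C = 0\<^sub>m n k"
proof -
  have Ac: "A \<in> carrier_mat n n" and Aa: "adj A = A" using A unfolding hermitian_mat_def by auto
  have "adj (A * C) * (A * C) = adj C * (A * A * C)"
    using Ac C Aa by (simp add: adj_mult[OF Ac C] assoc_mult_mat[of _ k n _ n _ k])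
  also have "\<dots> = 0\<^sub>m k k" using z C by simp
  finally show ?thesis using adjM_M_zero[of "A * C" n k] Ac C by auto
qed

lemma pow_commute:
  assumes A: "A \<in> carrier_mat n n" and M: "M \<in> carrier_mat n n" and c: "M * A = A * M"
  shows "M * A ^\<^sub>m k = A ^\<^sub>m k * M"
proof (induct k)
  case 0 thus ?case using A M by simp
next
  case (Suc k)
  have "M * A ^\<^sub>m Suc k = (M * A ^\<^sub>m k) * A" using A M by (simp add: assoc_mult_mat[of _ n n _ n _ n])
  also have "\<dots> = A ^\<^sub>m k * (M * A)" using Suc A M by (simp add: assoc_mult_mat[of _ n n _ n _ n])
  also have "\<dots> = A ^\<^sub>m k * (A * M)" using c by simp
  also have "\<dots> = A ^\<^sub>m Suc k * M" using A M by (simp add: assoc_mult_mat[of _ n n _ n _ n])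
  finally show ?case .
qed

lemma pow_add_mat:
  assumes A: "A \<in> carrier_mat n n"
  shows "A ^\<^sub>m (j + k) = A ^\<^sub>m j * A ^\<^sub>m k"
proof (induct k)
  case 0 thus ?case using A by simp
next
  case (Suc k) thus ?case using A by (simp add: assoc_mult_mat[of _ n n _ n _ n])
qed

lemma pow_Suc_left:
  assumes A: "A \<in> carrier_mat n n"
  shows "A ^\<^sub>m (Suc k) = A * A ^\<^sub>m k"
  using pow_commute[OF A A refl, of k] A by simp

lemma herm_descent:
  fixes A C :: "complex mat"
  assumes A: "hermitian_mat n A" and C: "C \<in> carrier_mat n n"
    and z: "A ^\<^sub>m (Suc (Suc k)) * C = 0\<^sub>m n n"
  shows "A ^\<^sub>m (Suc k) * C = 0\<^sub>m n n"
proof -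
  have Ac: "A \<in> carrier_mat n n" using A unfolding hermitian_mat_def by auto
  have p2: "A ^\<^sub>m (Suc (Suc k)) = A * (A * A ^\<^sub>m k)"
    using pow_Suc_left[OF Ac, of "Suc k"] pow_Suc_left[OF Ac, of k] by simp
  have "A ^\<^sub>m (Suc (Suc k)) * C = A * A * (A ^\<^sub>m k * C)"
  proof -
    have e: "A * A * (A ^\<^sub>m k * C) = A * (A * (A ^\<^sub>m k * C))" using Ac C by (intro assoc_mult_mat) auto
    have "A * (A * A ^\<^sub>m k) * C = A * ((A * A ^\<^sub>m k) * C)" using Ac C by (intro assoc_mult_mat) auto
    also have "(A * A ^\<^sub>m k) * C = A * (A ^\<^sub>m k * C)" using Ac C by (intro assoc_mult_mat) auto
    finally show ?thesis unfolding p2 e .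
  qed
  note eq = this
  have z': "A * A * (A ^\<^sub>m k * C) = 0\<^sub>m n n" using z unfolding eq .
  have "A * (A ^\<^sub>m k * C) = 0\<^sub>m n n" by (rule herm_sq_zero[OF A _ z']) (use Ac C in auto)
  moreover have "A ^\<^sub>m (Suc k) * C = A * (A ^\<^sub>m k * C)"
    unfolding pow_Suc_left[OF Ac, of k] using Ac C by (intro assoc_mult_mat) auto
  ultimately show ?thesis by simp
qed

lemma herm_descent1:
  fixes A C :: "complex mat"
  assumes A: "hermitian_mat n A" and C: "C \<in> carrier_mat n n"
    and z: "A ^\<^sub>m (Suc k) * C = 0\<^sub>m n n"
  shows "A * C = 0\<^sub>m n n"
  using z
proof (induct k)
  case 0 thus ?case using A C unfolding hermitian_mat_def by simp
next
  case (Suc k) thus ?case using herm_descent[OF A C] by blast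
qed


lemma idx_lt: assumes "r < (n::nat)" "s < n" shows "r * n + s < n * n"
proof -
  have "r * n + s < (r+1) * n" using assms by simp
  also have "(r+1) * n \<le> n * n" using assms by (intro mult_le_mono1) simp
  finally show ?thesis .
qed

lemma lin_rel_exists:
  fixes A :: "complex mat"
  assumes A: "A \<in> carrier_mat n n"
  shows "\<exists>c m. (\<exists>j<m. c j \<noteq> 0) \<and>
     (\<forall>r<n. \<forall>s<n. (\<Sum>l<m. c l * (A ^\<^sub>m l) $$ (r,s)) = 0)"
proof -
  define f where "f = (\<lambda>l. vec (n*n) (\<lambda>i. (A ^\<^sub>m l) $$ (i div n, i mod n)))"
  show ?thesis
  proof (cases "inj_on f {..<n*n+1}")
    case False
    then obtain j k where jk: "j < n*n+1" "k < n*n+1" "j \<noteq> k" "f j = f k"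
      unfolding inj_on_def by auto
    have eq: "(A ^\<^sub>m j) $$ (r,s) = (A ^\<^sub>m k) $$ (r,s)" if "r < n" "s < n" for r s
    proof -
      have i: "r * n + s < n * n" using that
        by (rule idx_lt)
      have d: "(r * n + s) div n = r" "(r * n + s) mod n = s" using that by auto
      from arg_cong[OF jk(4), of "\<lambda>v. v $ (r*n+s)"] show ?thesis unfolding f_def using i d by simp
    qed
    define c where "c = (\<lambda>l. (if l = j then 1 else 0) - (if l = k then 1 else (0::complex)))"
    show ?thesis
    proof (rule exI[of _ c], rule exI[of _ "n*n+1"], intro conjI allI impI)
      show "\<exists>l<n*n+1. c l \<noteq> 0" using jk by (intro exI[of _ j]) (auto simp: c_def)
      fix r s assume rs: "r < n" "s < n"
      have "(\<Sum>l<n*n+1. c l * (A ^\<^sub>m l) $$ (r,s))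
        = (\<Sum>l<n*n+1. (if l = j then (A ^\<^sub>m l) $$ (r,s) else 0)) - (\<Sum>l<n*n+1. (if l = k then (A ^\<^sub>m l) $$ (r,s) else 0))"
        unfolding sum_subtractf[symmetric] by (rule sum.cong) (auto simp: c_def)
      also have "\<dots> = 0" using jk eq[OF rs] by (simp only: sum.delta finite_lessThan lessThan_iff if_True) simp
      finally show "(\<Sum>l<n*n+1. c l * (A ^\<^sub>m l) $$ (r,s)) = 0" .
    qed
  next
    case True
    interpret V: vec_space "TYPE(complex)" "n*n" .
    define S where "S = f ` {..<n*n+1}"
    have S: "S \<subseteq> carrier_vec (n*n)" unfolding S_def f_def by auto
    have cardS: "card S = n*n+1" unfolding S_def using card_image[OF True] by simp
    have finS: "finite S" unfolding S_def by auto
    have "V.lin_dep S"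
    proof (rule ccontr)
      assume "\<not> V.lin_dep S"
      hence "card S \<le> V.dim" using V.li_le_dim[OF V.fin_dim] S by auto
      thus False using cardS V.dim_is_n by simp
    qed
    from V.finite_lin_dep[OF finS this] S obtain a v where
      a: "V.lincomb a S = 0\<^sub>v (n*n)" and v: "v \<in> S" "a v \<noteq> 0"
      by auto
    define c where "c = (\<lambda>l. a (f l))"
    show ?thesis
    proof (rule exI[of _ c], rule exI[of _ "n*n+1"], intro conjI allI impI)
      from v obtain j where "j < n*n+1" "v = f j" unfolding S_def by auto
      thus "\<exists>l<n*n+1. c l \<noteq> 0" using v by (auto simp: c_def)
      fix r s assume rs: "r < n" "s < n"
      have i: "r * n + s < n * n" using rs
        by (rule idx_lt)
      have d: "(r * n + s) div n = r" "(r * n + s) mod n = s" using rs by auto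
      have "0 = V.lincomb a S $ (r*n+s)" using a i by simp
      also have "\<dots> = (\<Sum>x\<in>S. a x * x $ (r*n+s))" by (rule V.lincomb_index[OF i S])
      also have "\<dots> = (\<Sum>l<n*n+1. a (f l) * f l $ (r*n+s))"
        unfolding S_def by (rule sum.reindex[OF True, unfolded comp_def])
      also have "\<dots> = (\<Sum>l<n*n+1. c l * (A ^\<^sub>m l) $$ (r,s))"
        unfolding c_def f_def using i d by simp
      finally show "(\<Sum>l<n*n+1. c l * (A ^\<^sub>m l) $$ (r,s)) = 0" by simp
    qed
  qed
qed


fun mpoly :: "(nat \<Rightarrow> complex) \<Rightarrow> nat \<Rightarrow> nat \<Rightarrow> complex mat \<Rightarrow> complex mat" where
  "mpoly c 0 n A = 0\<^sub>m n n"
| "mpoly c (Suc k) n A = mpoly c k n A + c k \<cdot>\<^sub>m A ^\<^sub>m k"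

lemma mpoly_carrier[simp]: "A \<in> carrier_mat n n \<Longrightarrow> mpoly c k n A \<in> carrier_mat n n"
  by (induct k) auto

lemma mpoly_index: assumes A: "A \<in> carrier_mat n n" and ij: "i < n" "j < n"
  shows "mpoly c k n A $$ (i,j) = (\<Sum>l<k. c l * (A ^\<^sub>m l) $$ (i,j))"
  by (induct k) (use A ij in auto)

lemma mpoly_commute: assumes A: "A \<in> carrier_mat n n" and M: "M \<in> carrier_mat n n"
  and c: "M * A = A * M"
  shows "M * mpoly c k n A = mpoly c k n A * M"
proof (induct k)
  case 0 thus ?case using M by simp
next
  case (Suc k)
  have "M * mpoly c (Suc k) n A = M * mpoly c k n A + c k \<cdot>\<^sub>m (M * A ^\<^sub>m k)"
    using A M by (simp add: mult_add_distrib_mat[OF M, of _ n] mult_smult_distrib[OF M, of _ n])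
  also have "\<dots> = mpoly c k n A * M + c k \<cdot>\<^sub>m (A ^\<^sub>m k * M)"
    using Suc pow_commute[OF A M c] by simp
  also have "\<dots> = mpoly c (Suc k) n A * M"
    using A M by (simp add: add_mult_distrib_mat[of _ n n _ M n] mult_smult_assoc_mat[of _ n n M n])
  finally show ?case .
qed

lemma mpoly_zero: assumes A: "A \<in> carrier_mat n n" and z: "\<forall>l<k. c l = 0"
  shows "mpoly c k n A = 0\<^sub>m n n"
  using z by (induct k) (use A in auto)

lemma mpoly_prefix: assumes A: "A \<in> carrier_mat n n" and z: "\<forall>l<j. c l = 0"
  shows "mpoly c (j + k) n A = A ^\<^sub>m j * mpoly (\<lambda>l. c (l + j)) k n A"
proof (induct k)
  case 0 thus ?case using mpoly_zero[OF A z] A by simp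
next
  case (Suc k)
  have "mpoly c (j + Suc k) n A = mpoly c (j + k) n A + c (j + k) \<cdot>\<^sub>m A ^\<^sub>m (j + k)" by simp
  also have "\<dots> = A ^\<^sub>m j * mpoly (\<lambda>l. c (l + j)) k n A + c (j + k) \<cdot>\<^sub>m (A ^\<^sub>m j * A ^\<^sub>m k)"
    using Suc pow_add_mat[OF A] by simp
  also have "\<dots> = A ^\<^sub>m j * mpoly (\<lambda>l. c (l + j)) (Suc k) n A"
    using A by (simp add: mult_add_distrib_mat[of "A ^\<^sub>m j" n n _ n] mult_smult_distrib[of "A ^\<^sub>m j" n n _ n] add.commute)
  finally show ?case .
qed

lemma mpoly_shift: assumes A: "A \<in> carrier_mat n n"
  shows "mpoly c (Suc k) n A = c 0 \<cdot>\<^sub>m 1\<^sub>m n + A * mpoly (\<lambda>l. c (Suc l)) k n A"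
proof (induct k)
  case 0 thus ?case using A by simp
next
  case (Suc k)
  have "mpoly c (Suc (Suc k)) n A = mpoly c (Suc k) n A + c (Suc k) \<cdot>\<^sub>m A ^\<^sub>m (Suc k)" by simp
  also have "\<dots> = (c 0 \<cdot>\<^sub>m 1\<^sub>m n + A * mpoly (\<lambda>l. c (Suc l)) k n A) + c (Suc k) \<cdot>\<^sub>m (A * A ^\<^sub>m k)"
    using Suc pow_Suc_left[OF A] by simp
  also have "\<dots> = c 0 \<cdot>\<^sub>m 1\<^sub>m n + (A * mpoly (\<lambda>l. c (Suc l)) k n A + c (Suc k) \<cdot>\<^sub>m (A * A ^\<^sub>m k))"
    using A by (intro assoc_add_mat[of _ n n]) auto
  also have "A * mpoly (\<lambda>l. c (Suc l)) k n A + c (Suc k) \<cdot>\<^sub>m (A * A ^\<^sub>m k) = A * mpoly (\<lambda>l. c (Suc l)) (Suc k) n A"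
    using A by (simp add: mult_add_distrib_mat[OF A, of _ n] mult_smult_distrib[OF A, of _ n])
  finally show ?case .
qed


lemma mpoly_dims[simp]: "A \<in> carrier_mat n n \<Longrightarrow> dim_row (mpoly c k n A) = n"
  "A \<in> carrier_mat n n \<Longrightarrow> dim_col (mpoly c k n A) = n"
  using mpoly_carrier[of A n c k] unfolding carrier_mat_def by blast+

lemma smult_mat_zero_cancel:
  fixes X :: "complex mat"
  assumes X: "X \<in> carrier_mat n m" and c: "c \<noteq> 0" and z: "c \<cdot>\<^sub>m X = 0\<^sub>m n m"
  shows "X = 0\<^sub>m n m"
proof (rule eq_matI)
  fix i j assume ij: "i < dim_row (0\<^sub>m n m)" "j < dim_col (0\<^sub>m n m)"
  from arg_cong[OF z, of "\<lambda>M. M $$ (i,j)"] have "c * X $$ (i,j) = 0" using X ij by simp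
  thus "X $$ (i,j) = 0\<^sub>m n m $$ (i,j)" using c ij by simp
qed (use X in auto)

lemma minus_mat_zero_eq:
  fixes X Y :: "complex mat"
  assumes X: "X \<in> carrier_mat n m" and Y: "Y \<in> carrier_mat n m" and z: "X - Y = 0\<^sub>m n m"
  shows "X = Y"
proof (rule eq_matI)
  fix i j assume ij: "i < dim_row Y" "j < dim_col Y"
  from arg_cong[OF z, of "\<lambda>M. M $$ (i,j)"] show "X $$ (i,j) = Y $$ (i,j)" using X Y ij by simp
qed (use X Y in auto)

lemma herm_ginv:
  fixes A :: "complex mat"
  assumes A: "hermitian_mat n A"
  shows "\<exists>Y \<in> carrier_mat n n. A * Y * A = A \<and>
     (\<forall>M \<in> carrier_mat n n. M * A = A * M \<longrightarrow> M * Y = Y * M)"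
proof -
  have Ac: "A \<in> carrier_mat n n" using A unfolding hermitian_mat_def by auto
  obtain c m where nz: "\<exists>j<m. c j \<noteq> 0"
    and rel: "\<forall>r<n. \<forall>s<n. (\<Sum>l<m. c l * (A ^\<^sub>m l) $$ (r,s)) = 0"
    using lin_rel_exists[OF Ac] by blast
  have P0: "mpoly c m n A = 0\<^sub>m n n"
    by (rule eq_matI) (use Ac rel mpoly_carrier[OF Ac, of c m] in \<open>auto simp: mpoly_index\<close>)
  define j0 where "j0 = (LEAST j. c j \<noteq> 0)"
  have cj0: "c j0 \<noteq> 0" unfolding j0_def using nz by (metis (mono_tags, lifting) LeastI)
  have below: "\<forall>l<j0. c l = 0" unfolding j0_def using not_less_Least by blast
  have j0m: "j0 < m"
  proof -
    from nz obtain j where "j < m" "c j \<noteq> 0" by auto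
    hence "j0 \<le> j" unfolding j0_def by (simp add: Least_le)
    thus ?thesis using \<open>j < m\<close> by simp
  qed
  obtain k where m: "m = j0 + Suc k" using j0m by (metis add_Suc_right less_iff_Suc_add add.commute)
  define c' where "c' = (\<lambda>l. c (l + j0))"
  define P where "P = mpoly (\<lambda>l. c' (Suc l)) k n A"
  have P: "P \<in> carrier_mat n n" unfolding P_def using Ac by simp
  have "A ^\<^sub>m j0 * (c j0 \<cdot>\<^sub>m 1\<^sub>m n + A * P) = 0\<^sub>m n n"
    using P0 mpoly_prefix[OF Ac below, of "Suc k"] mpoly_shift[OF Ac, of c' k]
    unfolding m c'_def P_def by simp
  define q where "q = (-1 / c j0) \<cdot>\<^sub>m P"
  have q: "q \<in> carrier_mat n n" unfolding q_def using P by simp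
  have Aq: "A * q = (-1 / c j0) \<cdot>\<^sub>m (A * P)" unfolding q_def using Ac P by (simp add: mult_smult_distrib)
  have "c j0 \<cdot>\<^sub>m 1\<^sub>m n + A * P = c j0 \<cdot>\<^sub>m (1\<^sub>m n - A * q)"
    unfolding Aq by (rule eq_matI) (use Ac P cj0 in \<open>auto simp: field_simps\<close>)
  hence "A ^\<^sub>m j0 * (c j0 \<cdot>\<^sub>m (1\<^sub>m n - A * q)) = 0\<^sub>m n n" using \<open>A ^\<^sub>m j0 * _ = _\<close> by simp
  hence "c j0 \<cdot>\<^sub>m (A ^\<^sub>m j0 * (1\<^sub>m n - A * q)) = 0\<^sub>m n n"
  proof -
    have "1\<^sub>m n - A * q \<in> carrier_mat n n" using Ac q by (intro minus_carrier_mat) auto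
    thus ?thesis using Ac q mult_smult_distrib[of "A ^\<^sub>m j0" n n "1\<^sub>m n - A * q" n "c j0"] \<open>A ^\<^sub>m j0 * (c j0 \<cdot>\<^sub>m _) = _\<close> by simp
  qed
  hence Z: "A ^\<^sub>m j0 * (1\<^sub>m n - A * q) = 0\<^sub>m n n"
    by (rule smult_mat_zero_cancel[rotated 1, OF cj0]) (use Ac q in auto)
  have Z1: "A * (1\<^sub>m n - A * q) = 0\<^sub>m n n"
  proof (cases j0)
    case 0
    hence "1\<^sub>m n - A * q = 0\<^sub>m n n" using Z Ac q by simp
    thus ?thesis using Ac by simp
  next
    case (Suc j)
    show ?thesis by (rule herm_descent1[OF A _ Z[unfolded Suc]]) (use Ac q in auto)
  qed
  hence "A - A * (A * q) = 0\<^sub>m n n" using Ac q by (simp add: mult_minus_distrib_mat[of _ n n _ n])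
  hence AAq: "A = A * (A * q)" by (rule minus_mat_zero_eq[rotated 2]) (use Ac q in auto)
  have qc: "\<forall>M \<in> carrier_mat n n. M * A = A * M \<longrightarrow> M * q = q * M"
  proof (intro ballI impI)
    fix M assume M: "M \<in> carrier_mat n n" and cm: "M * A = A * M"
    have "M * q = (-1 / c j0) \<cdot>\<^sub>m (M * P)" unfolding q_def using M P by (simp add: mult_smult_distrib)
    also have "M * P = P * M" unfolding P_def by (rule mpoly_commute[OF Ac M cm])
    also have "(-1 / c j0) \<cdot>\<^sub>m (P * M) = q * M" unfolding q_def using M P by (simp add: mult_smult_assoc_mat)
    finally show "M * q = q * M" .
  qed
  have "A * q * A = A * (q * A)" using Ac q by (simp add: assoc_mult_mat[of _ n n _ n _ n])
  also have "q * A = A * q" using qc Ac by auto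
  also have "A * (A * q) = A" using AAq by simp
  finally show ?thesis using q qc by blast
qed


lemma minus_vec_zero_eq:
  fixes x y :: "complex vec"
  assumes "x \<in> carrier_vec n" "y \<in> carrier_vec n" "x - y = 0\<^sub>v n"
  shows "x = y"
proof (rule eq_vecI)
  fix i assume i: "i < dim_vec y"
  have i': "i < n" using i assms by auto
  have "(x - y) $ i = x $ i - y $ i" using i' assms(1,2) by auto
  moreover have "(x - y) $ i = 0" unfolding assms(3) using i' by simp
  ultimately show "x $ i = y $ i" by simp
qed (use assms in auto)

lemma herm_rng_sub_supp:
  fixes A :: "complex mat"
  assumes A: "hermitian_mat n A"
  shows "rng_mat n A \<subseteq> supp_mat n A"
proof
  have Ac: "A \<in> carrier_mat n n" and Aa: "adj A = A" using A unfolding hermitian_mat_def by auto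
  fix w assume "w \<in> rng_mat n A"
  then obtain v where v: "v \<in> carrier_vec n" and w: "w = A *\<^sub>v v" unfolding rng_mat_def by auto
  show "w \<in> supp_mat n A" unfolding supp_mat_def
  proof (intro CollectI conjI ballI)
    show "w \<in> carrier_vec n" using w v Ac by auto
    fix x assume "x \<in> ker_mat n A"
    hence x: "x \<in> carrier_vec n" and Ax: "A *\<^sub>v x = 0\<^sub>v n" unfolding ker_mat_def using Ac by auto
    have "w \<bullet>c x = v \<bullet>c (A *\<^sub>v x)" unfolding w using ip_adj[OF Ac v x] Aa by simp
    also have "\<dots> = 0" unfolding Ax using v by simp
    finally show "w \<bullet>c x = 0" .
  qed
qed

lemma herm_supp_sub_rng:
  fixes A :: "complex mat"
  assumes A: "hermitian_mat n A"
  shows "supp_mat n A \<subseteq> rng_mat n A"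
proof
  have Ac: "A \<in> carrier_mat n n" and Aa: "adj A = A" using A unfolding hermitian_mat_def by auto
  obtain Y where Y: "Y \<in> carrier_mat n n" and AYA: "A * Y * A = A"
    and com: "\<forall>M \<in> carrier_mat n n. M * A = A * M \<longrightarrow> M * Y = Y * M"
    using herm_ginv[OF A] by blast
  have AY: "A * Y = Y * A" using com Ac by blast
  have AAY: "A * (A * Y) = A"
  proof -
    have "A * (A * Y) = A * (Y * A)" using AY by simp
    also have "\<dots> = A * Y * A" using Ac Y by (simp add: assoc_mult_mat[of _ n n _ n _ n])
    finally show ?thesis using AYA by simp
  qed
  fix w assume "w \<in> supp_mat n A"
  hence w: "w \<in> carrier_vec n" and orth: "\<And>x. x \<in> ker_mat n A \<Longrightarrow> w \<bullet>c x = 0"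
    unfolding supp_mat_def by auto
  define b where "b = w - A *\<^sub>v (Y *\<^sub>v w)"
  have Yw: "Y *\<^sub>v w \<in> carrier_vec n" using Y w by auto
  have AYw: "A *\<^sub>v (Y *\<^sub>v w) \<in> carrier_vec n" using Ac Yw by auto
  have b: "b \<in> carrier_vec n" unfolding b_def using w AYw by auto
  have "A *\<^sub>v (A *\<^sub>v (Y *\<^sub>v w)) = (A * (A * Y)) *\<^sub>v w"
    using Ac Y w by (simp add: assoc_mult_mat_vec[of _ n n _ n])
  also have "\<dots> = A *\<^sub>v w" using AAY by simp
  finally have e: "A *\<^sub>v (A *\<^sub>v (Y *\<^sub>v w)) = A *\<^sub>v w" .
  have Ab: "A *\<^sub>v b = 0\<^sub>v n" unfolding b_def
    using Ac w AYw e by (simp add: mult_minus_distrib_mat_vec)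
  hence bk: "b \<in> ker_mat n A" unfolding ker_mat_def using b Ac by auto
  have "b \<bullet>c b = w \<bullet>c b - (A *\<^sub>v (Y *\<^sub>v w)) \<bullet>c b"
    using ip_minus_l[OF w AYw b, folded b_def] .
  also have "(A *\<^sub>v (Y *\<^sub>v w)) \<bullet>c b = (Y *\<^sub>v w) \<bullet>c (A *\<^sub>v b)" using ip_adj[OF Ac Yw b] Aa by simp
  also have "\<dots> = 0" unfolding Ab using Yw by simp
  also have "w \<bullet>c b = 0" using orth[OF bk] .
  finally have "b \<bullet>c b = 0" by simp
  hence "b = 0\<^sub>v n" using conjugate_square_eq_0_vec[OF b] by simp
  hence "w - A *\<^sub>v (Y *\<^sub>v w) = 0\<^sub>v n" unfolding b_def .
  hence "w = A *\<^sub>v (Y *\<^sub>v w)" by (rule minus_vec_zero_eq[OF w AYw])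
  thus "w \<in> rng_mat n A" unfolding rng_mat_def using Yw by auto
qed

lemma herm_supp_eq_rng: "hermitian_mat n (A :: complex mat) \<Longrightarrow> supp_mat n A = rng_mat n A"
  using herm_supp_sub_rng herm_rng_sub_supp by blast

lemma rng_mult_sub:
  assumes A: "A \<in> carrier_mat n n" and B: "B \<in> carrier_mat n n"
  shows "rng_mat n (A * B) \<subseteq> rng_mat n A"
proof
  fix w assume "w \<in> rng_mat n (A * B)"
  then obtain v where v: "v \<in> carrier_vec n" "w = (A * B) *\<^sub>v v" unfolding rng_mat_def by auto
  hence "w = A *\<^sub>v (B *\<^sub>v v)" using A B by (simp add: assoc_mult_mat_vec[of _ n n _ n])
  thus "w \<in> rng_mat n A" unfolding rng_mat_def using B v by auto
qed


lemma kron_dims[simp]: "dim_row (kron A B) = dim_row A * dim_row B" "dim_col (kron A B) = dim_col A * dim_col B"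
  unfolding kron_def by auto

lemma kron_index: "r < dim_row A * dim_row B \<Longrightarrow> c < dim_col A * dim_col B \<Longrightarrow>
  kron A B $$ (r,c) = A $$ (r div dim_row B, c div dim_col B) * B $$ (r mod dim_row B, c mod dim_col B)"
  unfolding kron_def by auto

lemma kron_carrier[simp]: "A \<in> carrier_mat a b \<Longrightarrow> B \<in> carrier_mat c d \<Longrightarrow> kron A B \<in> carrier_mat (a*c) (b*d)"
  unfolding carrier_mat_def by auto

lemma div_lt_mult: "(j::nat) < d * m \<Longrightarrow> j div m < d"
  by (metis div_eq_0_iff div_mult2_eq mult.commute mult_0_right not_less0 div_less_iff_less_mult
      bot_nat_0.not_eq_extremum)

lemma adj_kron1:
  assumes M: "M \<in> carrier_mat m m"
  shows "adj (kron (1\<^sub>m d) M) = kron (1\<^sub>m d) (adj M)"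
proof (rule eq_matI)
  fix i j assume i: "i < dim_row (kron (1\<^sub>m d) (adj M))" and j: "j < dim_col (kron (1\<^sub>m d) (adj M))"
  have i': "i < d * m" and j': "j < d * m" using i j M by auto
  have m: "m > 0" using i' by (cases m) auto
  have "i div m < d" "j div m < d" using i' j' div_lt_mult by auto
  moreover have "i mod m < m" "j mod m < m" using m by auto
  ultimately show "adj (kron (1\<^sub>m d) M) $$ (i, j) = kron (1\<^sub>m d) (adj M) $$ (i, j)"
    using i' j' M by (auto simp: kron_index)
qed (use M in auto)

lemma adj_four_block:
  assumes A: "A \<in> carrier_mat n1 m1" and B: "B \<in> carrier_mat n1 m2"
    and C: "C \<in> carrier_mat n2 m1" and D: "D \<in> carrier_mat n2 m2"
  shows "adj (four_block_mat A B C D) = four_block_mat (adj A) (adj C) (adj B) (adj D)"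
  by (rule eq_matI) (use A B C D in auto)

lemma adj_diag_block: "adj (diag_block_mat As) = diag_block_mat (map adj As)"
proof (induct As)
  case Nil thus ?case by simp
next
  case (Cons A As)
  let ?D = "diag_block_mat As"
  have "adj (diag_block_mat (A # As)) =
    four_block_mat (adj A) (adj (0\<^sub>m (dim_row ?D) (dim_col A))) (adj (0\<^sub>m (dim_row A) (dim_col ?D))) (adj ?D)"
    unfolding diag_block_mat.simps Let_def
    by (rule adj_four_block) auto
  also have "\<dots> = diag_block_mat (map adj (A # As))"
  proof -
    have d: "dim_col (diag_block_mat (map adj As)) = dim_row ?D" "dim_row (diag_block_mat (map adj As)) = dim_col ?D"
      unfolding Cons[symmetric] by simp_all
    show ?thesis unfolding list.map diag_block_mat.simps Let_def d Cons by simp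
  qed
  finally show ?case .
qed

definition bsizes :: "nat list \<Rightarrow> nat list \<Rightarrow> nat list" where
  "bsizes ds ms = map (\<lambda>k. ds ! k * ms ! k) [0..<length ds]"

definition okMs :: "nat list \<Rightarrow> nat list \<Rightarrow> complex mat list \<Rightarrow> bool" where
  "okMs ds ms Ms \<longleftrightarrow> length Ms = length ds \<and> (\<forall>k < length ds. Ms ! k \<in> carrier_mat (ms ! k) (ms ! k))"

lemma block_op_carrier:
  assumes ok: "okMs ds ms Ms"
  shows "block_op ds Ms \<in> carrier_mat (sum_list (bsizes ds ms)) (sum_list (bsizes ds ms))"
proof -
  have "map dim_row (map (\<lambda>k. kron (1\<^sub>m (ds ! k)) (Ms ! k)) [0..<length ds]) = bsizes ds ms"
    "map dim_col (map (\<lambda>k. kron (1\<^sub>m (ds ! k)) (Ms ! k)) [0..<length ds]) = bsizes ds ms"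
    using ok unfolding bsizes_def okMs_def by auto
  thus ?thesis unfolding block_op_def carrier_mat_def by (simp add: dim_diag_block_mat)
qed

lemma adj_block_op:
  assumes ok: "okMs ds ms Ms"
  shows "adj (block_op ds Ms) = block_op ds (map adj Ms)"
  unfolding block_op_def adj_diag_block map_map
  using ok unfolding okMs_def by (intro arg_cong[where f=diag_block_mat] map_cong) (auto simp: adj_kron1)

lemma okMs_adj: "okMs ds ms Ms \<Longrightarrow> okMs ds ms (map adj Ms)"
  unfolding okMs_def by auto


lemma sum_list_take_nth: "k < length (xs :: nat list) \<Longrightarrow> sum_list (take k xs) + xs ! k \<le> sum_list xs"
proof (induct xs arbitrary: k)
  case Nil thus ?case by simp
next
  case (Cons x xs) thus ?case by (cases k) auto
qed

lemma diag_block_index_col: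
  assumes k: "k < length As" and c: "c < dim_col (As ! k)" and r: "r < sum_list (map dim_row As)"
  shows "diag_block_mat As $$ (r, sum_list (map dim_col (take k As)) + c) =
    (if sum_list (map dim_row (take k As)) \<le> r \<and> r < sum_list (map dim_row (take k As)) + dim_row (As ! k)
     then As ! k $$ (r - sum_list (map dim_row (take k As)), c) else 0)"
  using assms
proof (induct As arbitrary: k r)
  case Nil thus ?case by simp
next
  case (Cons A As k r)
  let ?D = "diag_block_mat As"
  have colb: "sum_list (map dim_col (take k (A # As))) + c < dim_col A + dim_col ?D"
  proof -
    have "sum_list (take k (map dim_col (A # As))) + (map dim_col (A # As)) ! k \<le> sum_list (map dim_col (A # As))"
      by (rule sum_list_take_nth) (use Cons.prems in simp)
    hence "sum_list (map dim_col (take k (A # As))) + dim_col ((A # As) ! k) \<le> dim_col A + dim_col ?D"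
      unfolding take_map[symmetric] nth_map[OF Cons.prems(1)] by (simp add: dim_diag_block_mat)
    thus ?thesis using Cons.prems(2) by linarith
  qed
  have rowb: "r < dim_row A + dim_row ?D" using Cons.prems by (simp add: dim_diag_block_mat)
  show ?case
  proof (cases k)
    case 0
    thus ?thesis using Cons.prems colb rowb unfolding diag_block_mat.simps Let_def
      by (subst index_mat_four_block) auto
  next
    case (Suc k')
    have k': "k' < length As" "c < dim_col (As ! k')" using Cons.prems Suc by auto
    show ?thesis
    proof (cases "r < dim_row A")
      case True
      thus ?thesis using Cons.prems colb rowb Suc unfolding diag_block_mat.simps Let_def
        by (subst index_mat_four_block) auto
    next
      case False
      have r': "r - dim_row A < sum_list (map dim_row As)" using Cons.prems False by simp
      have "diag_block_mat (A # As) $$ (r, sum_list (map dim_col (take k (A # As))) + c)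
        = ?D $$ (r - dim_row A, sum_list (map dim_col (take k' As)) + c)"
        using Cons.prems colb rowb Suc False unfolding diag_block_mat.simps Let_def
        by (subst index_mat_four_block) (auto simp: add.assoc)
      also have "\<dots> = (if sum_list (map dim_row (take k' As)) \<le> r - dim_row A \<and> r - dim_row A < sum_list (map dim_row (take k' As)) + dim_row (As ! k')
     then As ! k' $$ (r - dim_row A - sum_list (map dim_row (take k' As)), c) else 0)"
        by (rule Cons.hyps[OF k' r'])
      also have "\<dots> = (if sum_list (map dim_row (take k (A # As))) \<le> r \<and> r < sum_list (map dim_row (take k (A # As))) + dim_row ((A # As) ! k)
     then (A # As) ! k $$ (r - sum_list (map dim_row (take k (A # As))), c) else 0)"
        using False Suc by (auto simp: diff_diff_add)
      finally show ?thesis .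
    qed
  qed
qed

definition injm :: "nat \<Rightarrow> nat \<Rightarrow> nat \<Rightarrow> complex mat" where
  "injm n m off = mat n m (\<lambda>(r,c). if r = off + c then 1 else 0)"

lemma injm_carrier[simp]: "injm n m off \<in> carrier_mat n m"
  unfolding injm_def by auto

lemma injm_dims[simp]: "dim_row (injm n m off) = n" "dim_col (injm n m off) = m"
  unfolding injm_def by auto

lemma adj_injm: assumes "off + m \<le> n" shows "adj (injm n m off) * injm n m off = 1\<^sub>m m"
proof (rule eq_matI)
  fix i j assume i: "i < dim_row (1\<^sub>m m)" and j: "j < dim_col (1\<^sub>m m)"
  have "(adj (injm n m off) * injm n m off) $$ (i,j) = (\<Sum>r<n. (if r = off + i then 1 else 0) * (if r = off + j then 1 else 0))"
    using i j by (auto simp: scalar_prod_def injm_def lessThan_atLeast0 intro!: sum.cong)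
  also have "\<dots> = (\<Sum>r<n. if r = off + i then (if off + i = off + j then 1 else 0) else 0)"
    by (rule sum.cong) auto
  also have "\<dots> = (if i = j then 1 else 0)" using i assms by (simp add: sum.delta)
  finally show "(adj (injm n m off) * injm n m off) $$ (i,j) = 1\<^sub>m m $$ (i,j)" using i j by simp
qed auto

lemma mult_injm_index:
  assumes M: "M \<in> carrier_mat k n" and r: "r < k" and c: "c < m" and oc: "off + m \<le> n"
  shows "(M * injm n m off) $$ (r,c) = M $$ (r, off + c)"
proof -
  have "(M * injm n m off) $$ (r,c) = (\<Sum>t<n. M $$ (r,t) * (if t = off + c then 1 else 0))"
    using M r c by (simp add: scalar_prod_def injm_def lessThan_atLeast0)
  also have "\<dots> = (\<Sum>t<n. if t = off + c then M $$ (r,t) else 0)" by (rule sum.cong) auto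
  also have "\<dots> = M $$ (r, off + c)" using c oc by (simp add: sum.delta)
  finally show ?thesis .
qed

lemma injm_mult_index:
  assumes M: "M \<in> carrier_mat m k" and r: "r < n" and c: "c < k"
  shows "(injm n m off * M) $$ (r,c) = (if off \<le> r \<and> r < off + m then M $$ (r - off, c) else 0)"
proof -
  have "(injm n m off * M) $$ (r,c) = (\<Sum>t<m. (if r = off + t then 1 else 0) * M $$ (t,c))"
    using M r c by (simp add: scalar_prod_def injm_def lessThan_atLeast0)
  also have "\<dots> = (\<Sum>t<m. if t = r - off then (if off \<le> r then M $$ (t,c) else 0) else 0)"
    by (rule sum.cong) auto
  also have "\<dots> = (if off \<le> r \<and> r < off + m then M $$ (r - off, c) else 0)"
    by (simp add: sum.delta) linarith
  finally show ?thesis .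
qed


lemma block_list_dims:
  assumes ok: "okMs ds ms Ms"
  shows "map dim_col (map (\<lambda>k. kron (1\<^sub>m (ds ! k)) (Ms ! k)) [0..<length ds]) = bsizes ds ms"
    "map dim_row (map (\<lambda>k. kron (1\<^sub>m (ds ! k)) (Ms ! k)) [0..<length ds]) = bsizes ds ms"
  using ok unfolding bsizes_def okMs_def by auto

lemma kron1_index_small:
  assumes M: "M \<in> carrier_mat m m" and d: "d > 0" and x: "x < d * m" and c: "c < m"
  shows "kron (1\<^sub>m d) M $$ (x, c) = (if x < m then M $$ (x, c) else 0)"
proof -
  have "m \<le> d * m" using d by simp
  hence cm: "c < d * m" using c by linarith
  have "kron (1\<^sub>m d) M $$ (x, c) = 1\<^sub>m d $$ (x div m, c div m) * M $$ (x mod m, c mod m)"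
    using M x cm by (simp add: kron_index)
  also have "\<dots> = (if x < m then M $$ (x, c) else 0)"
  proof -
    have xd: "x div m < d" using x div_lt_mult by auto
    have "c div m = 0" "c mod m = c" using c by auto
    moreover have "(x div m = 0) = (x < m)" using c by (simp add: div_eq_0_iff)
    ultimately show ?thesis using xd d by auto
  qed
  finally show ?thesis .
qed

lemma block_op_injm:
  assumes ok: "okMs ds ms Ms" and k: "k < length ds" and dpos: "ds ! k > 0"
  shows "block_op ds Ms * injm (sum_list (bsizes ds ms)) (ms ! k) (sum_list (take k (bsizes ds ms)))
       = injm (sum_list (bsizes ds ms)) (ms ! k) (sum_list (take k (bsizes ds ms))) * Ms ! k"
    (is "?B * ?J = ?J * ?M")
proof -
  let ?S = "sum_list (bsizes ds ms)"
  let ?off = "sum_list (take k (bsizes ds ms))"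
  let ?As = "map (\<lambda>k. kron (1\<^sub>m (ds ! k)) (Ms ! k)) [0..<length ds]"
  have Mk: "?M \<in> carrier_mat (ms ! k) (ms ! k)" using ok k unfolding okMs_def by auto
  have B: "?B \<in> carrier_mat ?S ?S" by (rule block_op_carrier[OF ok])
  have bk: "bsizes ds ms ! k = ds ! k * ms ! k" using k unfolding bsizes_def by simp
  have lb: "length (bsizes ds ms) = length ds" unfolding bsizes_def by simp
  have offS: "?off + ds ! k * ms ! k \<le> ?S" using sum_list_take_nth[of k "bsizes ds ms"] k lb bk by simp
  have mdm: "ms ! k \<le> ds ! k * ms ! k" using dpos by simp
  have offS': "?off + ms ! k \<le> ?S" using offS mdm by linarith
  show ?thesis
  proof (rule eq_matI)
    fix r c assume r: "r < dim_row (?J * ?M)" and c: "c < dim_col (?J * ?M)"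
    have r': "r < ?S" and c': "c < ms ! k" using r c Mk by auto
    have tk: "map dim_col (take k ?As) = take k (bsizes ds ms)" "map dim_row (take k ?As) = take k (bsizes ds ms)"
      by (simp_all only: take_map[symmetric] block_list_dims[OF ok])
    have Ak: "?As ! k = kron (1\<^sub>m (ds ! k)) ?M" using k by simp
    have lA: "k < length ?As" using k by simp
    have cA: "c < dim_col (?As ! k)" unfolding Ak using Mk c' mdm by (simp del: One_nat_def; linarith)
    have rA: "r < sum_list (map dim_row ?As)" using r' block_list_dims(2)[OF ok] by simp
    have D: "diag_block_mat ?As $$ (r, sum_list (map dim_col (take k ?As)) + c) =
      (if sum_list (map dim_row (take k ?As)) \<le> r \<and> r < sum_list (map dim_row (take k ?As)) + dim_row (?As ! k)
       then ?As ! k $$ (r - sum_list (map dim_row (take k ?As)), c) else 0)"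
      by (rule diag_block_index_col[OF lA cA rA])
    have rAk: "dim_row (kron (1\<^sub>m (ds ! k)) ?M) = ds ! k * ms ! k" using Mk by simp
    have D2: "?B $$ (r, ?off + c) = (if ?off \<le> r \<and> r < ?off + ds ! k * ms ! k
       then kron (1\<^sub>m (ds ! k)) ?M $$ (r - ?off, c) else 0)"
      using D unfolding tk Ak rAk block_op_def[symmetric] .
    have "(?B * ?J) $$ (r,c) = ?B $$ (r, ?off + c)" by (rule mult_injm_index[OF B r' c' offS'])
    also have "\<dots> = (if ?off \<le> r \<and> r < ?off + ms ! k then ?M $$ (r - ?off, c) else 0)"
    proof -
      have kk: "kron (1\<^sub>m (ds ! k)) ?M $$ (r - ?off, c) = (if r - ?off < ms ! k then ?M $$ (r - ?off, c) else 0)"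
        if "?off \<le> r" "r < ?off + ds ! k * ms ! k"
        by (rule kron1_index_small[OF Mk dpos _ c']) (use that in linarith)
      show ?thesis
      proof (cases "?off \<le> r \<and> r < ?off + ds ! k * ms ! k")
        case True
        thus ?thesis using kk D2 by auto
      next
        case False
        have nc: "\<not> (?off \<le> r \<and> r < ?off + ms ! k)" using False mdm by linarith
        have l: "?B $$ (r, ?off + c) = 0" by (simp only: D2 if_not_P[OF False])
        show ?thesis by (simp only: l if_not_P[OF nc])
      qed
    qed
    also have "\<dots> = (?J * ?M) $$ (r,c)" using injm_mult_index[OF Mk r' c'] by simp
    finally show "(?B * ?J) $$ (r,c) = (?J * ?M) $$ (r,c)" .
  qed (use B Mk in auto)
qed


lemma K_carrier:
  assumes U: "unitary_rep G dH U" and V: "unitary_rep G dK V" and g: "g \<in> carrier G"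
  shows "kron (V g) (cconj (U g)) \<in> carrier_mat (dK * dH) (dK * dH)"
proof -
  have "V g \<in> carrier_mat dK dK" "U g \<in> carrier_mat dH dH"
    using U V g unfolding unitary_rep_def unitary_mat_def by auto
  thus ?thesis unfolding cconj_def by (intro kron_carrier) auto
qed

lemma comm_carrier: "M \<in> commutant G dK dH V U \<Longrightarrow> M \<in> carrier_mat (dK * dH) (dK * dH)"
  unfolding commutant_def by auto

lemma comm_commutes: "M \<in> commutant G dK dH V U \<Longrightarrow> g \<in> carrier G \<Longrightarrow>
   kron (V g) (cconj (U g)) * M = M * kron (V g) (cconj (U g))"
  unfolding commutant_def by auto

lemma comm_memI: "M \<in> carrier_mat (dK * dH) (dK * dH) \<Longrightarrow>
  (\<And>g. g \<in> carrier G \<Longrightarrow> kron (V g) (cconj (U g)) * M = M * kron (V g) (cconj (U g))) \<Longrightarrow>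
  M \<in> commutant G dK dH V U"
  unfolding commutant_def by auto

context
  fixes G :: "('g, 'b) monoid_scheme" and dH dK :: nat and U V :: "'g \<Rightarrow> complex mat"
  assumes U: "unitary_rep G dH U" and V: "unitary_rep G dK V"
begin

lemma comm_add: assumes A: "A \<in> commutant G dK dH V U" and B: "B \<in> commutant G dK dH V U"
  shows "A + B \<in> commutant G dK dH V U"
proof (rule comm_memI)
  let ?N = "dK * dH"
  have Ac: "A \<in> carrier_mat ?N ?N" and Bc: "B \<in> carrier_mat ?N ?N" using comm_carrier[OF A] comm_carrier[OF B] by auto
  show "A + B \<in> carrier_mat ?N ?N" using Ac Bc by auto
  fix g assume g: "g \<in> carrier G"
  let ?K = "kron (V g) (cconj (U g))"
  have K: "?K \<in> carrier_mat ?N ?N" by (rule K_carrier[OF U V g])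
  have "?K * (A + B) = ?K * A + ?K * B" using K Ac Bc by (rule mult_add_distrib_mat)
  also have "\<dots> = A * ?K + B * ?K" using comm_commutes[OF A g] comm_commutes[OF B g] by simp
  also have "\<dots> = (A + B) * ?K" using K Ac Bc by (simp add: add_mult_distrib_mat[OF Ac Bc K])
  finally show "?K * (A + B) = (A + B) * ?K" .
qed

lemma comm_minus: assumes A: "A \<in> commutant G dK dH V U" and B: "B \<in> commutant G dK dH V U"
  shows "A - B \<in> commutant G dK dH V U"
proof (rule comm_memI)
  let ?N = "dK * dH"
  have Ac: "A \<in> carrier_mat ?N ?N" and Bc: "B \<in> carrier_mat ?N ?N" using comm_carrier[OF A] comm_carrier[OF B] by auto
  show "A - B \<in> carrier_mat ?N ?N" using Ac Bc by auto
  fix g assume g: "g \<in> carrier G"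
  let ?K = "kron (V g) (cconj (U g))"
  have K: "?K \<in> carrier_mat ?N ?N" by (rule K_carrier[OF U V g])
  have "?K * (A - B) = ?K * A - ?K * B" using K Ac Bc by (rule mult_minus_distrib_mat)
  also have "\<dots> = A * ?K - B * ?K" using comm_commutes[OF A g] comm_commutes[OF B g] by simp
  also have "\<dots> = (A - B) * ?K" using K Ac Bc by (simp add: minus_mult_distrib_mat[OF Ac Bc K])
  finally show "?K * (A - B) = (A - B) * ?K" .
qed

lemma comm_smult: assumes A: "A \<in> commutant G dK dH V U"
  shows "c \<cdot>\<^sub>m A \<in> commutant G dK dH V U"
proof (rule comm_memI)
  let ?N = "dK * dH"
  have Ac: "A \<in> carrier_mat ?N ?N" using comm_carrier[OF A] by auto
  show "c \<cdot>\<^sub>m A \<in> carrier_mat ?N ?N" using Ac by auto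
  fix g assume g: "g \<in> carrier G"
  let ?K = "kron (V g) (cconj (U g))"
  have K: "?K \<in> carrier_mat ?N ?N" by (rule K_carrier[OF U V g])
  have "?K * (c \<cdot>\<^sub>m A) = c \<cdot>\<^sub>m (?K * A)" using K Ac by (rule mult_smult_distrib)
  also have "\<dots> = c \<cdot>\<^sub>m (A * ?K)" using comm_commutes[OF A g] by simp
  also have "\<dots> = (c \<cdot>\<^sub>m A) * ?K" using K Ac by (simp add: mult_smult_assoc_mat[OF Ac K])
  finally show "?K * (c \<cdot>\<^sub>m A) = (c \<cdot>\<^sub>m A) * ?K" .
qed

lemma comm_mult: assumes A: "A \<in> commutant G dK dH V U" and B: "B \<in> commutant G dK dH V U"
  shows "A * B \<in> commutant G dK dH V U"
proof (rule comm_memI)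
  let ?N = "dK * dH"
  have Ac: "A \<in> carrier_mat ?N ?N" and Bc: "B \<in> carrier_mat ?N ?N" using comm_carrier[OF A] comm_carrier[OF B] by auto
  show "A * B \<in> carrier_mat ?N ?N" using Ac Bc by auto
  fix g assume g: "g \<in> carrier G"
  let ?K = "kron (V g) (cconj (U g))"
  have K: "?K \<in> carrier_mat ?N ?N" by (rule K_carrier[OF U V g])
  have "?K * (A * B) = (?K * A) * B" using K Ac Bc by (simp add: assoc_mult_mat[OF K Ac Bc])
  also have "\<dots> = A * (?K * B)" using comm_commutes[OF A g] K Ac Bc by (simp add: assoc_mult_mat[OF Ac K Bc])
  also have "\<dots> = A * (B * ?K)" using comm_commutes[OF B g] by simp
  also have "\<dots> = (A * B) * ?K" using K Ac Bc by (simp add: assoc_mult_mat[OF Ac Bc K])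
  finally show "?K * (A * B) = (A * B) * ?K" .
qed

lemma comm_ginv: assumes H: "H \<in> commutant G dK dH V U" and hH: "hermitian_mat (dK * dH) H"
  shows "\<exists>Y \<in> commutant G dK dH V U. H * Y * H = H \<and> H * Y = Y * H"
proof -
  let ?N = "dK * dH"
  obtain Y where Y: "Y \<in> carrier_mat ?N ?N" and HYH: "H * Y * H = H"
    and com: "\<forall>M \<in> carrier_mat ?N ?N. M * H = H * M \<longrightarrow> M * Y = Y * M"
    using herm_ginv[OF hH] by blast
  have Hc: "H \<in> carrier_mat ?N ?N" using comm_carrier[OF H] by auto
  have "Y \<in> commutant G dK dH V U"
  proof (rule comm_memI[OF Y])
    fix g assume g: "g \<in> carrier G"
    show "kron (V g) (cconj (U g)) * Y = Y * kron (V g) (cconj (U g))"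
      using com K_carrier[OF U V g] comm_commutes[OF H g] by auto
  qed
  moreover have "H * Y = Y * H" using com Hc by auto
  ultimately show ?thesis using HYH by blast
qed

end

lemma ptrace_add_smult:
  assumes A: "A \<in> carrier_mat (dK * dH) (dK * dH)" and B: "B \<in> carrier_mat (dK * dH) (dK * dH)"
  shows "ptrace_K dK dH (A + c \<cdot>\<^sub>m B) = ptrace_K dK dH A + c \<cdot>\<^sub>m ptrace_K dK dH B"
proof (rule eq_matI)
  fix i j assume i: "i < dim_row (ptrace_K dK dH A + c \<cdot>\<^sub>m ptrace_K dK dH B)"
    and j: "j < dim_col (ptrace_K dK dH A + c \<cdot>\<^sub>m ptrace_K dK dH B)"
  have i': "i < dH" and j': "j < dH" using i j unfolding ptrace_K_def by auto
  have lt: "\<And>l x. l < dK \<Longrightarrow> x < dH \<Longrightarrow> l * dH + x < dK * dH"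
  proof -
    fix l x assume "l < dK" "x < dH"
    hence "l * dH + x < (l + 1) * dH" by simp
    also have "\<dots> \<le> dK * dH" using \<open>l < dK\<close> by (intro mult_le_mono1) simp
    finally show "l * dH + x < dK * dH" .
  qed
  show "ptrace_K dK dH (A + c \<cdot>\<^sub>m B) $$ (i, j) = (ptrace_K dK dH A + c \<cdot>\<^sub>m ptrace_K dK dH B) $$ (i, j)"
    using i' j' A B lt by (auto simp: ptrace_K_def sum.distrib sum_distrib_left intro!: sum.cong)
qed (auto simp: ptrace_K_def)

lemma ptrace_minus_smult:
  assumes A: "A \<in> carrier_mat (dK * dH) (dK * dH)" and B: "B \<in> carrier_mat (dK * dH) (dK * dH)"
  shows "ptrace_K dK dH (A - c \<cdot>\<^sub>m B) = ptrace_K dK dH A - c \<cdot>\<^sub>m ptrace_K dK dH B"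
proof (rule eq_matI)
  fix i j assume i: "i < dim_row (ptrace_K dK dH A - c \<cdot>\<^sub>m ptrace_K dK dH B)"
    and j: "j < dim_col (ptrace_K dK dH A - c \<cdot>\<^sub>m ptrace_K dK dH B)"
  have i': "i < dH" and j': "j < dH" using i j unfolding ptrace_K_def by auto
  have lt: "\<And>l x. l < dK \<Longrightarrow> x < dH \<Longrightarrow> l * dH + x < dK * dH"
  proof -
    fix l x assume "l < dK" "x < dH"
    hence "l * dH + x < (l + 1) * dH" by simp
    also have "\<dots> \<le> dK * dH" using \<open>l < dK\<close> by (intro mult_le_mono1) simp
    finally show "l * dH + x < dK * dH" .
  qed
  show "ptrace_K dK dH (A - c \<cdot>\<^sub>m B) $$ (i, j) = (ptrace_K dK dH A - c \<cdot>\<^sub>m ptrace_K dK dH B) $$ (i, j)"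
    using i' j' A B lt by (auto simp: ptrace_K_def sum_subtractf sum_distrib_left intro!: sum.cong)
qed (auto simp: ptrace_K_def)


lemma mat_vec_zero[simp]: "A \<in> carrier_mat n m \<Longrightarrow> A *\<^sub>v 0\<^sub>v m = 0\<^sub>v n"
  by (rule eq_vecI) (auto simp: scalar_prod_def)

lemma smult_mat_vec: "A \<in> carrier_mat n m \<Longrightarrow> v \<in> carrier_vec m \<Longrightarrow> (c \<cdot>\<^sub>m A) *\<^sub>v v = c \<cdot>\<^sub>v (A *\<^sub>v v)"
  by (rule eq_vecI) (auto simp: scalar_prod_def sum_distrib_left algebra_simps)

lemma herm_add_smult:
  assumes "hermitian_mat n R" "hermitian_mat n T"
  shows "hermitian_mat n (R + complex_of_real t \<cdot>\<^sub>m T)" "hermitian_mat n (R - complex_of_real t \<cdot>\<^sub>m T)"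
proof -
  have R: "R \<in> carrier_mat n n" "adj R = R" and T: "T \<in> carrier_mat n n" "adj T = T"
    using assms unfolding hermitian_mat_def by auto
  show "hermitian_mat n (R + complex_of_real t \<cdot>\<^sub>m T)" unfolding hermitian_mat_def
    using R T by (simp add: adj_add[of _ n n] adj_smult)
  show "hermitian_mat n (R - complex_of_real t \<cdot>\<^sub>m T)" unfolding hermitian_mat_def
    using R T minus_carrier_mat[of "complex_of_real t \<cdot>\<^sub>m T" n n R] by (simp add: adj_minus[of _ n n] adj_smult)
qed

lemma herm_from_sum:
  assumes R: "hermitian_mat n R" and RT: "hermitian_mat n (R + c \<cdot>\<^sub>m T)" and T: "T \<in> carrier_mat n n"
    and c: "c \<noteq> 0" "cnj c = c"
  shows "hermitian_mat n T"
  unfolding hermitian_mat_def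
proof (intro conjI T eq_matI)
  have Rc: "R \<in> carrier_mat n n" "adj R = R" using R unfolding hermitian_mat_def by auto
  have e: "adj (R + c \<cdot>\<^sub>m T) = R + c \<cdot>\<^sub>m T" using RT unfolding hermitian_mat_def by auto
  fix i j assume i: "i < dim_row T" and j: "j < dim_col T"
  have i': "i < n" and j': "j < n" using i j T by auto
  from arg_cong[OF e, of "\<lambda>M. M $$ (i,j)"] have "cnj (R $$ (j,i)) + cnj c * cnj (T $$ (j,i)) = R $$ (i,j) + c * T $$ (i,j)"
    using i' j' Rc T by simp
  moreover have a1: "adj R $$ (i,j) = cnj (R $$ (j,i))" using i' j' Rc(1) by simp
  hence "cnj (R $$ (j,i)) = R $$ (i,j)" using Rc(2) by simp
  ultimately have "c * cnj (T $$ (j,i)) = c * T $$ (i,j)" using c by simp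
  thus "adj T $$ (i,j) = T $$ (i,j)" using c i' j' T by simp
qed (use T in auto)

lemma sum_minus_cancel: "(R :: complex mat) \<in> carrier_mat n m \<Longrightarrow> T \<in> carrier_mat n m \<Longrightarrow> c \<noteq> 0 \<Longrightarrow>
  T = (1 / c) \<cdot>\<^sub>m ((R + c \<cdot>\<^sub>m T) - R)"
  by (rule eq_matI) auto

lemma smult_mat_cancel:
  fixes X Y :: "complex mat"
  assumes X: "X \<in> carrier_mat n m" and Y: "Y \<in> carrier_mat n m" and c: "c \<noteq> 0" and e: "c \<cdot>\<^sub>m X = c \<cdot>\<^sub>m Y"
  shows "X = Y"
proof (rule eq_matI)
  fix i j assume "i < dim_row Y" "j < dim_col Y"
  with arg_cong[OF e, of "\<lambda>M. M $$ (i,j)"] show "X $$ (i,j) = Y $$ (i,j)" using X Y c by simp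
qed (use X Y in auto)

definition alg_ok :: "nat \<Rightarrow> complex mat set \<Rightarrow> bool" where
  "alg_ok N A' \<longleftrightarrow> A' \<subseteq> carrier_mat N N \<and>
     (\<forall>X\<in>A'. \<forall>Y\<in>A'. X + Y \<in> A' \<and> X - Y \<in> A' \<and> X * Y \<in> A') \<and>
     (\<forall>X\<in>A'. \<forall>c. c \<cdot>\<^sub>m X \<in> A') \<and> (\<forall>X\<in>A'. adj X \<in> A') \<and>
     (\<forall>H\<in>A'. hermitian_mat N H \<longrightarrow> (\<exists>Y\<in>A'. H * Y * H = H \<and> H * Y = Y * H))"


lemma alg_carrier: "alg_ok N A' \<Longrightarrow> X \<in> A' \<Longrightarrow> X \<in> carrier_mat N N"
  unfolding alg_ok_def by auto
lemma alg_add: "alg_ok N A' \<Longrightarrow> X \<in> A' \<Longrightarrow> Y \<in> A' \<Longrightarrow> X + Y \<in> A'"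
  unfolding alg_ok_def by auto
lemma alg_minus: "alg_ok N A' \<Longrightarrow> X \<in> A' \<Longrightarrow> Y \<in> A' \<Longrightarrow> X - Y \<in> A'"
  unfolding alg_ok_def by auto
lemma alg_mult: "alg_ok N A' \<Longrightarrow> X \<in> A' \<Longrightarrow> Y \<in> A' \<Longrightarrow> X * Y \<in> A'"
  unfolding alg_ok_def by auto
lemma alg_smult: "alg_ok N A' \<Longrightarrow> X \<in> A' \<Longrightarrow> c \<cdot>\<^sub>m X \<in> A'"
  unfolding alg_ok_def by auto
lemma alg_adj: "alg_ok N A' \<Longrightarrow> X \<in> A' \<Longrightarrow> adj X \<in> A'"
  unfolding alg_ok_def by auto
lemma alg_ginv: "alg_ok N A' \<Longrightarrow> H \<in> A' \<Longrightarrow> hermitian_mat N H \<Longrightarrow> \<exists>Y\<in>A'. H * Y * H = H \<and> H * Y = Y * H"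
  unfolding alg_ok_def by auto

lemma factor_through:
  assumes alg: "alg_ok N A'" and X: "X \<in> A'" and Q: "Q \<in> carrier_mat N N"
    and T: "T \<in> A'" and hT: "hermitian_mat N T"
    and ker: "\<forall>v\<in>carrier_vec N. (adj X * Q * X) *\<^sub>v v = 0\<^sub>v N \<longrightarrow> T *\<^sub>v v = 0\<^sub>v N"
  shows "\<exists>Op. hermitian_mat N Op \<and> Op \<in> A' \<and> supp_mat N Op \<subseteq> rng_mat N X \<and> T = adj X * Op * X"
proof -
  have Xc: "X \<in> carrier_mat N N" using alg_carrier[OF alg X] .
  have Tc: "T \<in> carrier_mat N N" using alg_carrier[OF alg T] .
  have aT: "adj T = T" using hT unfolding hermitian_mat_def by auto
  have aX: "adj X \<in> A'" using alg_adj[OF alg X] .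
  define Gm where "Gm = adj X * X"
  have Gm: "Gm \<in> A'" unfolding Gm_def using alg_mult[OF alg aX X] .
  have Gmc: "Gm \<in> carrier_mat N N" using alg_carrier[OF alg Gm] .
  have hGm: "hermitian_mat N Gm" unfolding hermitian_mat_def Gm_def
    using Xc mult_carrier_mat[OF adj_carrier[OF Xc] Xc] by (simp add: adj_mult[of "adj X" N N X N])
  obtain Y where Y: "Y \<in> A'" and GYG: "Gm * Y * Gm = Gm" using alg_ginv[OF alg Gm hGm] by blast
  have Yc: "Y \<in> carrier_mat N N" using alg_carrier[OF alg Y] .
  have kerG: "T *\<^sub>v v = 0\<^sub>v N" if v: "v \<in> carrier_vec N" and Gv: "Gm *\<^sub>v v = 0\<^sub>v N" for v
  proof -
    have Xv: "X *\<^sub>v v \<in> carrier_vec N" using Xc v by auto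
    have "(X *\<^sub>v v) \<bullet>c (X *\<^sub>v v) = v \<bullet>c (adj X *\<^sub>v (X *\<^sub>v v))" by (rule ip_adj[OF Xc v Xv])
    also have "adj X *\<^sub>v (X *\<^sub>v v) = Gm *\<^sub>v v" unfolding Gm_def using Xc v
      by (simp add: assoc_mult_mat_vec[of "adj X" N N X N v])
    finally have "(X *\<^sub>v v) \<bullet>c (X *\<^sub>v v) = 0" using Gv v by simp
    hence X0: "X *\<^sub>v v = 0\<^sub>v N" using conjugate_square_eq_0_vec[OF Xv] by simp
    have "(adj X * Q * X) *\<^sub>v v = adj X *\<^sub>v (Q *\<^sub>v (X *\<^sub>v v))"
    proof -
      have "(adj X * Q * X) *\<^sub>v v = (adj X * Q) *\<^sub>v (X *\<^sub>v v)"
        by (rule assoc_mult_mat_vec[of _ N N X N v]) (use Xc Q v in auto)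
      also have "\<dots> = adj X *\<^sub>v (Q *\<^sub>v (X *\<^sub>v v))"
        by (rule assoc_mult_mat_vec[of "adj X" N N Q N]) (use Xc Q v in auto)
      finally show ?thesis .
    qed
    also have "\<dots> = 0\<^sub>v N" unfolding X0 using Xc Q by simp
    finally show ?thesis using ker v by blast
  qed
  have TYG: "T * (Y * Gm) = T"
  proof (rule mat_eq_vecI[of _ N N])
    show "T * (Y * Gm) \<in> carrier_mat N N" "T \<in> carrier_mat N N" using Tc Yc Gmc by auto
    fix v :: "complex vec" assume v: "v \<in> carrier_vec N"
    define u where "u = v - (Y * Gm) *\<^sub>v v"
    have YGv: "(Y * Gm) *\<^sub>v v \<in> carrier_vec N" using Yc Gmc v by auto
    have u: "u \<in> carrier_vec N" unfolding u_def using v YGv by auto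
    have "Gm *\<^sub>v u = Gm *\<^sub>v v - Gm *\<^sub>v ((Y * Gm) *\<^sub>v v)" unfolding u_def
      using Gmc v YGv by (simp add: mult_minus_distrib_mat_vec)
    also have "Gm *\<^sub>v ((Y * Gm) *\<^sub>v v) = (Gm * Y * Gm) *\<^sub>v v"
      using Gmc Yc v by (simp add: assoc_mult_mat_vec[of _ N N _ N v] assoc_mult_mat[of Gm N N Y N Gm N])
    also have "\<dots> = Gm *\<^sub>v v" unfolding GYG ..
    finally have "Gm *\<^sub>v u = 0\<^sub>v N" using Gmc v by simp
    hence Tu: "T *\<^sub>v u = 0\<^sub>v N" using kerG[OF u] by simp
    have "T *\<^sub>v u = T *\<^sub>v v - (T * (Y * Gm)) *\<^sub>v v" unfolding u_def
      using Tc v YGv Yc Gmc by (simp add: mult_minus_distrib_mat_vec assoc_mult_mat_vec[of T N N _ N v])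
    hence "T *\<^sub>v v - (T * (Y * Gm)) *\<^sub>v v = 0\<^sub>v N" using Tu by simp
    hence "T *\<^sub>v v = (T * (Y * Gm)) *\<^sub>v v" by (rule minus_vec_zero_eq[OF mult_mat_vec_carrier[OF Tc v] mult_mat_vec_carrier[OF mult_carrier_mat[OF Tc mult_carrier_mat[OF Yc Gmc]] v]])
    thus "(T * (Y * Gm)) *\<^sub>v v = T *\<^sub>v v" by simp
  qed
  define S where "S = Y * adj X"
  have S: "S \<in> A'" unfolding S_def using alg_mult[OF alg Y aX] .
  have Sc: "S \<in> carrier_mat N N" using alg_carrier[OF alg S] .
  have SX: "S * X = Y * Gm" unfolding S_def Gm_def using Yc Xc by (simp add: assoc_mult_mat[of Y N N "adj X" N X N])
  have SXc: "S * X \<in> carrier_mat N N" using Sc Xc by auto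
  have TSX: "T * (S * X) = T" unfolding SX by (rule TYG)
  have aSXT: "adj (S * X) * T = T"
  proof -
    have "adj (T * (S * X)) = adj (S * X) * adj T" by (rule adj_mult[OF Tc SXc])
    thus ?thesis unfolding TSX aT by simp
  qed
  define Op where "Op = adj S * T * S"
  have Opc: "Op \<in> carrier_mat N N" unfolding Op_def using Sc Tc by auto
  have hOp: "hermitian_mat N Op"
  proof -
    have aSc: "adj S \<in> carrier_mat N N" using Sc by simp
    have "adj Op = adj S * adj (adj S * T)" unfolding Op_def by (rule adj_mult[of _ N N S N]) (use aSc Tc Sc in auto)
    also have "adj (adj S * T) = adj T * S" using adj_mult[OF aSc Tc] by simp
    also have "adj S * (adj T * S) = Op" unfolding Op_def aT using aSc Tc Sc by (simp add: assoc_mult_mat[of _ N N _ N _ N])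
    finally show ?thesis unfolding hermitian_mat_def using Opc by simp
  qed
  have OpA: "Op \<in> A'" unfolding Op_def using alg_mult[OF alg alg_mult[OF alg alg_adj[OF alg S] T] S] .
  have aSc: "adj S \<in> carrier_mat N N" and aXc: "adj X \<in> carrier_mat N N" using Sc Xc by auto
  have "adj X * Op * X = (adj X * (adj S * T * S)) * X" unfolding Op_def ..
  also have "adj X * (adj S * T * S) = adj X * (adj S * T) * S"
    by (rule assoc_mult_mat[symmetric]) (use aXc aSc Tc Sc in auto)
  also have "adj X * (adj S * T) = adj X * adj S * T"
    by (rule assoc_mult_mat[symmetric]) (use aXc aSc Tc Sc in auto)
  also have "adj X * adj S * T * S * X = (adj X * adj S * T) * (S * X)"
    by (rule assoc_mult_mat) (use aXc aSc Tc Sc Xc in auto)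
  also have "adj X * adj S = adj (S * X)" using adj_mult[OF Sc Xc] by simp
  also have "adj (S * X) * T * (S * X) = adj (S * X) * (T * (S * X))"
    by (rule assoc_mult_mat) (use SXc Tc in auto)
  also have "\<dots> = T" unfolding TSX aSXT ..
  finally have eqT: "T = adj X * Op * X" by simp
  have s1: "supp_mat N Op = rng_mat N Op" by (rule herm_supp_eq_rng[OF hOp])
  have e1: "Op = adj S * (T * S)" unfolding Op_def by (rule assoc_mult_mat) (use Sc Tc in auto)
  have s2: "rng_mat N Op \<subseteq> rng_mat N (adj S)" unfolding e1 using Sc Tc by (intro rng_mult_sub) auto
  have e2: "adj S = X * adj Y" unfolding S_def using adj_mult[OF Yc adj_carrier[OF Xc]] by simp
  have s3: "rng_mat N (adj S) \<subseteq> rng_mat N X" unfolding e2 using Xc Yc by (intro rng_mult_sub) auto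
  have "supp_mat N Op \<subseteq> rng_mat N X" using s1 s2 s3 by blast
  thus ?thesis using hOp OpA eqT by blast
qed


lemma part1_fwd:
  assumes alg: "alg_ok N A'" and Nd: "N = dK * dH"
    and C: "C = {R \<in> A'. psd N R \<and> ptrace_K dK dH R = K0}"
    and R: "R \<in> C" and X: "X \<in> A'" and Q: "Q \<in> A'" and RQX: "R = adj X * Q * X"
    and T: "T \<in> carrier_mat N N" and pert: "perturbation C R T"
  shows "hermitian_mat N T \<and> T \<in> A' \<and> ptrace_K dK dH T = 0\<^sub>m dH dH \<and>
    (\<exists>Op. hermitian_mat N Op \<and> Op \<in> A' \<and> Op \<noteq> 0\<^sub>m N N \<and> supp_mat N Op \<subseteq> rng_mat N X \<and> T = adj X * Op * X)"
proof -
  from pert obtain t :: real where t: "t > 0" and Rp: "R + complex_of_real t \<cdot>\<^sub>m T \<in> C"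
    and Rm: "R - complex_of_real t \<cdot>\<^sub>m T \<in> C" and Tnz: "T \<noteq> 0\<^sub>m (dim_row T) (dim_col T)"
    unfolding perturbation_def by blast
  let ?c = "complex_of_real t"
  have c0: "?c \<noteq> 0" using t by simp
  have Tnz': "T \<noteq> 0\<^sub>m N N" using Tnz T by auto
  have RA: "R \<in> A'" and pR: "psd N R" and ptR: "ptrace_K dK dH R = K0" using R C by auto
  have RpA: "R + ?c \<cdot>\<^sub>m T \<in> A'" and pRp: "psd N (R + ?c \<cdot>\<^sub>m T)" and ptRp: "ptrace_K dK dH (R + ?c \<cdot>\<^sub>m T) = K0"
    using Rp C by auto
  have RmA: "R - ?c \<cdot>\<^sub>m T \<in> A'" and pRm: "psd N (R - ?c \<cdot>\<^sub>m T)"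
    using Rm C by auto
  have Rc: "R \<in> carrier_mat N N" using alg_carrier[OF alg RA] .
  have hR: "hermitian_mat N R" using pR unfolding psd_def by auto
  have hT: "hermitian_mat N T"
    by (rule herm_from_sum[OF hR _ T c0]) (use pRp in \<open>auto simp: psd_def\<close>)
  have TA: "T \<in> A'"
  proof -
    have "T = (1 / ?c) \<cdot>\<^sub>m ((R + ?c \<cdot>\<^sub>m T) - R)" by (rule sum_minus_cancel[OF Rc T c0])
    also have "\<dots> \<in> A'" by (rule alg_smult[OF alg alg_minus[OF alg RpA RA]])
    finally show ?thesis .
  qed
  have ptT: "ptrace_K dK dH T = 0\<^sub>m dH dH"
  proof -
    have Rc': "R \<in> carrier_mat (dK * dH) (dK * dH)" and T': "T \<in> carrier_mat (dK * dH) (dK * dH)"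
      using Rc T Nd by auto
    have "K0 = K0 + ?c \<cdot>\<^sub>m ptrace_K dK dH T"
      using ptrace_add_smult[OF Rc' T', of ?c] ptRp ptR by simp
    moreover have "ptrace_K dK dH T \<in> carrier_mat dH dH" unfolding ptrace_K_def by auto
    moreover have "K0 \<in> carrier_mat dH dH" using ptR unfolding ptrace_K_def by auto
    ultimately show ?thesis
    proof -
      assume e: "K0 = K0 + ?c \<cdot>\<^sub>m ptrace_K dK dH T" and P: "ptrace_K dK dH T \<in> carrier_mat dH dH"
        and K: "K0 \<in> carrier_mat dH dH"
      show ?thesis
      proof (rule eq_matI)
        fix i j assume ij: "i < dim_row (0\<^sub>m dH dH :: complex mat)" "j < dim_col (0\<^sub>m dH dH :: complex mat)"
        from arg_cong[OF e, of "\<lambda>M. M $$ (i,j)"] have "?c * ptrace_K dK dH T $$ (i,j) = 0"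
          using ij P K by simp
        thus "ptrace_K dK dH T $$ (i,j) = 0\<^sub>m dH dH $$ (i,j)" using c0 ij by simp
      qed (use P in auto)
    qed
  qed
  have ker: "\<forall>v\<in>carrier_vec N. (adj X * Q * X) *\<^sub>v v = 0\<^sub>v N \<longrightarrow> T *\<^sub>v v = 0\<^sub>v N"
  proof (intro ballI impI)
    fix v :: "complex vec" assume v: "v \<in> carrier_vec N" and Rv: "(adj X * Q * X) *\<^sub>v v = 0\<^sub>v N"
    hence Rv': "R *\<^sub>v v = 0\<^sub>v N" using RQX by simp
    have Tv: "T *\<^sub>v v \<in> carrier_vec N" using T v by auto
    have ep: "(R + ?c \<cdot>\<^sub>m T) *\<^sub>v v = ?c \<cdot>\<^sub>v (T *\<^sub>v v)"
      using Rc T v Rv' Tv by (simp add: add_mult_distrib_mat_vec[of _ N N] smult_mat_vec)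
    have em: "(R - ?c \<cdot>\<^sub>m T) *\<^sub>v v = - (?c \<cdot>\<^sub>v (T *\<^sub>v v))"
      using Rc T v Rv' Tv by (simp add: minus_mult_distrib_mat_vec[of _ N N] smult_mat_vec)
    have ip1: "Re (((R + ?c \<cdot>\<^sub>m T) *\<^sub>v v) \<bullet>c v) = t * Re ((T *\<^sub>v v) \<bullet>c v)"
      unfolding ep using ip_smult_l[OF Tv v, of ?c] by simp
    have ip2: "Re (((R - ?c \<cdot>\<^sub>m T) *\<^sub>v v) \<bullet>c v) = - (t * Re ((T *\<^sub>v v) \<bullet>c v))"
    proof -
      have "- (?c \<cdot>\<^sub>v (T *\<^sub>v v)) = (- ?c) \<cdot>\<^sub>v (T *\<^sub>v v)" by auto
      thus ?thesis unfolding em using ip_smult_l[OF Tv v, of "- ?c"] by simp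
    qed
    have "0 \<le> Re (((R + ?c \<cdot>\<^sub>m T) *\<^sub>v v) \<bullet>c v)" using pRp v unfolding psd_def by blast
    moreover have "0 \<le> Re (((R - ?c \<cdot>\<^sub>m T) *\<^sub>v v) \<bullet>c v)" using pRm v unfolding psd_def by blast
    ultimately have "Re (((R + ?c \<cdot>\<^sub>m T) *\<^sub>v v) \<bullet>c v) = 0" unfolding ip1 ip2 by simp
    from psd_ker[OF pRp v this] have "?c \<cdot>\<^sub>v (T *\<^sub>v v) = 0\<^sub>v N" unfolding ep .
    thus "T *\<^sub>v v = 0\<^sub>v N"
    proof -
      assume z: "?c \<cdot>\<^sub>v (T *\<^sub>v v) = 0\<^sub>v N"
      show ?thesis
      proof (rule eq_vecI)
        fix i assume i: "i < dim_vec (0\<^sub>v N :: complex vec)"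
        have dT: "dim_vec (T *\<^sub>v v) = N" using T by auto
        from arg_cong[OF z, of "\<lambda>w. w $ i"] have "?c * (T *\<^sub>v v) $ i = 0" using i dT by simp
        thus "(T *\<^sub>v v) $ i = 0\<^sub>v N $ i" using c0 i by simp
      qed (use T in auto)
    qed
  qed
  obtain Op where hOp: "hermitian_mat N Op" and OpA: "Op \<in> A'" and sOp: "supp_mat N Op \<subseteq> rng_mat N X"
    and eqT: "T = adj X * Op * X"
    using factor_through[OF alg X alg_carrier[OF alg Q] TA hT ker] by blast
  have "Op \<noteq> 0\<^sub>m N N"
  proof
    assume "Op = 0\<^sub>m N N"
    hence "T = 0\<^sub>m N N" using eqT alg_carrier[OF alg X] by simp
    thus False using Tnz' by simp
  qed
  thus ?thesis using hT TA ptT hOp OpA sOp eqT by blast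
qed


lemma op_zero:
  fixes Op X :: "complex mat"
  assumes hOp: "hermitian_mat N Op" and sOp: "supp_mat N Op \<subseteq> rng_mat N X" and Xc: "X \<in> carrier_mat N N"
    and z: "adj X * Op * X = 0\<^sub>m N N"
  shows "Op = 0\<^sub>m N N"
proof -
  have Opc: "Op \<in> carrier_mat N N" using hOp unfolding hermitian_mat_def by auto
  have aXc: "adj X \<in> carrier_mat N N" using Xc by simp
  have rOp: "\<exists>z\<in>carrier_vec N. Op *\<^sub>v v = X *\<^sub>v z" if v: "v \<in> carrier_vec N" for v
  proof -
    have "Op *\<^sub>v v \<in> rng_mat N Op" unfolding rng_mat_def using v by auto
    hence "Op *\<^sub>v v \<in> rng_mat N X" using sOp herm_supp_eq_rng[OF hOp] by auto
    thus ?thesis unfolding rng_mat_def by auto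
  qed
  have OO: "Op * Op \<in> carrier_mat N N" using Opc by auto
  have s1: "adj X * (Op * Op) = 0\<^sub>m N N"
  proof (rule mat_eq_vecI[of _ N N])
    show "adj X * (Op * Op) \<in> carrier_mat N N" "0\<^sub>m N N \<in> carrier_mat N N" using aXc OO by auto
    fix v :: "complex vec" assume v: "v \<in> carrier_vec N"
    obtain z where zc: "z \<in> carrier_vec N" and ez: "Op *\<^sub>v v = X *\<^sub>v z" using rOp[OF v] by blast
    have "(adj X * (Op * Op)) *\<^sub>v v = adj X *\<^sub>v (Op *\<^sub>v (Op *\<^sub>v v))"
      using aXc Opc v by (simp add: assoc_mult_mat_vec[of _ N N _ N v])
    also have "\<dots> = adj X *\<^sub>v (Op *\<^sub>v (X *\<^sub>v z))" unfolding ez ..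
    also have "\<dots> = (adj X * Op) *\<^sub>v (X *\<^sub>v z)"
      by (rule assoc_mult_mat_vec[symmetric]) (use aXc Opc Xc zc in auto)
    also have "\<dots> = (adj X * Op * X) *\<^sub>v z"
      by (rule assoc_mult_mat_vec[symmetric]) (use aXc Opc Xc zc in auto)
    also have "\<dots> = 0\<^sub>v N" unfolding z using zc by simp
    finally show "(adj X * (Op * Op)) *\<^sub>v v = 0\<^sub>m N N *\<^sub>v v" using v by simp
  qed
  have s2: "Op * Op = 0\<^sub>m N N"
  proof (rule mat_eq_vecI[OF OO])
    show "0\<^sub>m N N \<in> carrier_mat N N" by simp
    fix v :: "complex vec" assume v: "v \<in> carrier_vec N"
    define w where "w = (Op * Op) *\<^sub>v v"
    have wc: "w \<in> carrier_vec N" unfolding w_def using OO v by auto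
    have "w = Op *\<^sub>v (Op *\<^sub>v v)" unfolding w_def using Opc v by (simp add: assoc_mult_mat_vec[of _ N N _ N v])
    then obtain z where zc: "z \<in> carrier_vec N" and ez: "w = X *\<^sub>v z"
      using rOp[of "Op *\<^sub>v v"] Opc v by auto
    have "w \<bullet>c w = (X *\<^sub>v z) \<bullet>c w" by (simp only: ez[symmetric])
    also have "\<dots> = z \<bullet>c (adj X *\<^sub>v w)" by (rule ip_adj[OF Xc zc wc])
    also have "adj X *\<^sub>v w = (adj X * (Op * Op)) *\<^sub>v v" unfolding w_def
      using aXc OO v by (simp add: assoc_mult_mat_vec[of _ N N _ N v])
    also have "\<dots> = 0\<^sub>v N" unfolding s1 using v by simp
    finally have "w \<bullet>c w = 0" using zc by simp
    hence "w = 0\<^sub>v N" using conjugate_square_eq_0_vec[OF wc] by simp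
    thus "(Op * Op) *\<^sub>v v = 0\<^sub>m N N *\<^sub>v v" unfolding w_def using v by simp
  qed
  have "Op * Op * 1\<^sub>m N = 0\<^sub>m N N" using s2 OO by simp
  hence "Op * 1\<^sub>m N = 0\<^sub>m N N" by (rule herm_sq_zero[OF hOp, rotated]) simp
  thus ?thesis using Opc by simp
qed

lemma ip_self_sum: "(w :: complex vec) \<in> carrier_vec n \<Longrightarrow> Re (w \<bullet>c w) = (\<Sum>k<n. (cmod (w $ k))^2)"
proof -
  assume w: "w \<in> carrier_vec n"
  have "w \<bullet>c w = (\<Sum>k<n. w $ k * cnj (w $ k))" using w by (simp add: scalar_prod_def lessThan_atLeast0)
  also have "\<dots> = (\<Sum>k<n. complex_of_real ((cmod (w $ k))^2))" by (intro sum.cong refl) (rule complex_norm_square[symmetric])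
  finally show ?thesis by simp
qed

lemma form_bound:
  fixes B :: "complex mat"
  assumes B: "B \<in> carrier_mat n n"
  shows "\<exists>\<beta>\<ge>0. \<forall>w\<in>carrier_vec n. cmod ((B *\<^sub>v w) \<bullet>c w) \<le> \<beta> * Re (w \<bullet>c w)"
proof (intro exI[of _ "\<Sum>i<n. \<Sum>j<n. cmod (B $$ (i,j))"] conjI ballI)
  show "0 \<le> (\<Sum>i<n. \<Sum>j<n. cmod (B $$ (i,j)))" by (intro sum_nonneg) auto
  fix w :: "complex vec" assume w: "w \<in> carrier_vec n"
  define s where "s = Re (w \<bullet>c w)"
  have s: "s = (\<Sum>k<n. (cmod (w $ k))^2)" unfolding s_def by (rule ip_self_sum[OF w])
  have s0: "0 \<le> s" unfolding s by (intro sum_nonneg) auto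
  have sq: "(cmod (w $ i))^2 \<le> s" if "i < n" for i
    unfolding s by (rule member_le_sum) (use that in auto)
  have pr: "cmod (w $ i) * cmod (w $ j) \<le> s" if "i < n" "j < n" for i j
  proof -
    have "cmod (w $ i) \<le> sqrt s" using sq[OF that(1)] by (simp add: real_le_rsqrt)
    moreover have "cmod (w $ j) \<le> sqrt s" using sq[OF that(2)] by (simp add: real_le_rsqrt)
    ultimately have "cmod (w $ i) * cmod (w $ j) \<le> sqrt s * sqrt s" using s0 by (intro mult_mono) auto
    thus ?thesis using s0 by simp
  qed
  have "(B *\<^sub>v w) \<bullet>c w = (\<Sum>i<n. \<Sum>j<n. B $$ (i,j) * w $ j * cnj (w $ i))"
    using B w by (auto simp: scalar_prod_def mult_mat_vec_def row_def lessThan_atLeast0 sum_distrib_right intro!: sum.cong)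
  hence "cmod ((B *\<^sub>v w) \<bullet>c w) \<le> (\<Sum>i<n. cmod (\<Sum>j<n. B $$ (i,j) * w $ j * cnj (w $ i)))"
    by (simp only: norm_sum)
  also have "\<dots> \<le> (\<Sum>i<n. \<Sum>j<n. cmod (B $$ (i,j) * w $ j * cnj (w $ i)))"
    by (intro sum_mono norm_sum)
  also have "\<dots> \<le> (\<Sum>i<n. \<Sum>j<n. cmod (B $$ (i,j)) * s)"
  proof (intro sum_mono)
    fix i j assume i: "i \<in> {..<n}" and j: "j \<in> {..<n}"
    have "cmod (B $$ (i,j) * w $ j * cnj (w $ i)) = cmod (B $$ (i,j)) * (cmod (w $ i) * cmod (w $ j))"
      by (simp add: norm_mult)
    also have "\<dots> \<le> cmod (B $$ (i,j)) * s" using pr i j by (intro mult_left_mono) auto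
    finally show "cmod (B $$ (i,j) * w $ j * cnj (w $ i)) \<le> cmod (B $$ (i,j)) * s" .
  qed
  also have "\<dots> = (\<Sum>i<n. \<Sum>j<n. cmod (B $$ (i,j))) * s" by (simp add: sum_distrib_right)
  finally show "cmod ((B *\<^sub>v w) \<bullet>c w) \<le> (\<Sum>i<n. \<Sum>j<n. cmod (B $$ (i,j))) * Re (w \<bullet>c w)" unfolding s_def .
qed


lemma psd_Q_bound:
  fixes Q :: "complex mat"
  assumes pQ: "psd N Q"
  shows "\<exists>\<gamma>\<ge>0. \<forall>u\<in>carrier_vec N. Re ((Q *\<^sub>v u) \<bullet>c (Q *\<^sub>v u)) \<le> \<gamma> * Re ((Q *\<^sub>v u) \<bullet>c u)"
proof -
  have Qc: "Q \<in> carrier_mat N N" using pQ unfolding psd_def hermitian_mat_def by auto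
  obtain \<gamma> where g0: "\<gamma> \<ge> 0" and gb: "\<forall>w\<in>carrier_vec N. cmod ((Q *\<^sub>v w) \<bullet>c w) \<le> \<gamma> * Re (w \<bullet>c w)"
    using form_bound[OF Qc] by blast
  show ?thesis
  proof (intro exI[of _ \<gamma>] conjI ballI g0)
    fix u :: "complex vec" assume u: "u \<in> carrier_vec N"
    have Qu: "Q *\<^sub>v u \<in> carrier_vec N" using Qc u by auto
    define a where "a = Re ((Q *\<^sub>v u) \<bullet>c (Q *\<^sub>v u))"
    define f where "f = Re ((Q *\<^sub>v u) \<bullet>c u)"
    have a0: "0 \<le> a" unfolding a_def by (rule ip_self_ge0)
    have f0: "0 \<le> f" unfolding f_def using pQ u unfolding psd_def by blast
    have h1: "a^2 \<le> f * Re ((Q *\<^sub>v (Q *\<^sub>v u)) \<bullet>c (Q *\<^sub>v u))" unfolding a_def f_def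
      using psd_quad[OF pQ u Qu] .
    have h2: "Re ((Q *\<^sub>v (Q *\<^sub>v u)) \<bullet>c (Q *\<^sub>v u)) \<le> \<gamma> * a"
    proof -
      have "Re ((Q *\<^sub>v (Q *\<^sub>v u)) \<bullet>c (Q *\<^sub>v u)) \<le> cmod ((Q *\<^sub>v (Q *\<^sub>v u)) \<bullet>c (Q *\<^sub>v u))"
        by (rule complex_Re_le_cmod)
      also have "\<dots> \<le> \<gamma> * a" unfolding a_def using gb Qu by blast
      finally show ?thesis .
    qed
    have h3: "f * Re ((Q *\<^sub>v (Q *\<^sub>v u)) \<bullet>c (Q *\<^sub>v u)) \<le> f * (\<gamma> * a)" using h2 f0 by (rule mult_left_mono)
    have "a^2 \<le> f * (\<gamma> * a)" using h1 h3 by linarith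
    hence "a * a \<le> (\<gamma> * f) * a" by (simp add: power2_eq_square algebra_simps)
    thus "a \<le> \<gamma> * f"
    proof (cases "a = 0")
      case True thus ?thesis using g0 f0 by simp
    next
      case False
      hence "a > 0" using a0 by simp
      thus ?thesis using \<open>a * a \<le> (\<gamma> * f) * a\<close> by simp
    qed
  qed
qed

lemma op_factor_Q:
  fixes Q Op :: "complex mat"
  assumes hQ: "hermitian_mat N Q" and hOp: "hermitian_mat N Op" and sub: "rng_mat N Op \<subseteq> rng_mat N Q"
  shows "\<exists>Bm \<in> carrier_mat N N. Op = Q * Bm * Q"
proof -
  have Qc: "Q \<in> carrier_mat N N" and aQ: "adj Q = Q" using hQ unfolding hermitian_mat_def by auto
  have Opc: "Op \<in> carrier_mat N N" and aOp: "adj Op = Op" using hOp unfolding hermitian_mat_def by auto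
  obtain Y where Yc: "Y \<in> carrier_mat N N" and QYQ: "Q * Y * Q = Q" using herm_ginv[OF hQ] by blast
  define P where "P = Q * Y"
  have Pc: "P \<in> carrier_mat N N" unfolding P_def using Qc Yc by auto
  have POp: "P * Op = Op"
  proof (rule mat_eq_vecI[of _ N N])
    show "P * Op \<in> carrier_mat N N" "Op \<in> carrier_mat N N" using Pc Opc by auto
    fix v :: "complex vec" assume v: "v \<in> carrier_vec N"
    have "Op *\<^sub>v v \<in> rng_mat N Q" using sub v unfolding rng_mat_def by auto
    then obtain z where z: "z \<in> carrier_vec N" and ez: "Op *\<^sub>v v = Q *\<^sub>v z" unfolding rng_mat_def by auto
    have "(P * Op) *\<^sub>v v = P *\<^sub>v (Op *\<^sub>v v)" by (rule assoc_mult_mat_vec) (use Pc Opc v in auto)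
    also have "\<dots> = P *\<^sub>v (Q *\<^sub>v z)" unfolding ez ..
    also have "\<dots> = (Q * Y * Q) *\<^sub>v z" unfolding P_def
      by (subst assoc_mult_mat_vec[symmetric]) (use Qc Yc z in auto)
    also have "\<dots> = Op *\<^sub>v v" unfolding QYQ ez ..
    finally show "(P * Op) *\<^sub>v v = Op *\<^sub>v v" .
  qed
  have OpP: "Op * adj P = Op"
  proof -
    have "adj (P * Op) = adj Op * adj P" by (rule adj_mult[OF Pc Opc])
    thus ?thesis unfolding POp aOp by simp
  qed
  have aP: "adj P = adj Y * Q" unfolding P_def using adj_mult[OF Qc Yc] aQ by simp
  define Bm where "Bm = Y * Op * adj Y"
  have Bmc: "Bm \<in> carrier_mat N N" unfolding Bm_def using Yc Opc by auto
  have "Op = P * (Op * adj P)" unfolding OpP POp ..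
  also have "\<dots> = Q * Bm * Q"
  proof -
    have aYc: "adj Y \<in> carrier_mat N N" using Yc by simp
    have "P * (Op * adj P) = Q * (Y * (Op * (adj Y * Q)))" unfolding aP unfolding P_def
      by (rule assoc_mult_mat) (use Qc Yc Opc aYc in auto)
    also have "Op * (adj Y * Q) = Op * adj Y * Q" by (rule assoc_mult_mat[symmetric]) (use Qc Yc Opc aYc in auto)
    also have "Y * (Op * adj Y * Q) = Y * (Op * adj Y) * Q" by (rule assoc_mult_mat[symmetric]) (use Qc Yc Opc aYc in auto)
    also have "Y * (Op * adj Y) = Bm" unfolding Bm_def by (rule assoc_mult_mat[symmetric]) (use Qc Yc Opc aYc in auto)
    also have "Q * (Bm * Q) = Q * Bm * Q" by (rule assoc_mult_mat[symmetric]) (use Qc Bmc in auto)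
    finally show ?thesis .
  qed
  finally show ?thesis using Bmc by blast
qed

lemma sandwich_ip:
  fixes X M :: "complex mat"
  assumes X: "X \<in> carrier_mat N N" and M: "M \<in> carrier_mat N N" and v: "v \<in> carrier_vec N"
  shows "((adj X * M * X) *\<^sub>v v) \<bullet>c v = (M *\<^sub>v (X *\<^sub>v v)) \<bullet>c (X *\<^sub>v v)"
proof -
  have aX: "adj X \<in> carrier_mat N N" using X by simp
  have "(adj X * M * X) *\<^sub>v v = (adj X * M) *\<^sub>v (X *\<^sub>v v)" by (rule assoc_mult_mat_vec) (use aX M X v in auto)
  also have "\<dots> = adj X *\<^sub>v (M *\<^sub>v (X *\<^sub>v v))" by (rule assoc_mult_mat_vec) (use aX M X v in auto)
  finally have e: "(adj X * M * X) *\<^sub>v v = adj X *\<^sub>v (M *\<^sub>v (X *\<^sub>v v))" .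
  have "(adj X *\<^sub>v (M *\<^sub>v (X *\<^sub>v v))) \<bullet>c v = (M *\<^sub>v (X *\<^sub>v v)) \<bullet>c (adj (adj X) *\<^sub>v v)"
    by (rule ip_adj[OF aX]) (use M X v in auto)
  thus ?thesis unfolding e by simp
qed


lemma part1_bwd:
  assumes alg: "alg_ok N A'" and Nd: "N = dK * dH"
    and C: "C = {R \<in> A'. psd N R \<and> ptrace_K dK dH R = K0}"
    and R: "R \<in> C" and X: "X \<in> A'" and pQ: "psd N Q" and rX: "rng_mat N X = supp_mat N Q"
    and RQX: "R = adj X * Q * X"
    and T: "T \<in> carrier_mat N N" and hT: "hermitian_mat N T" and TA: "T \<in> A'"
    and ptT: "ptrace_K dK dH T = 0\<^sub>m dH dH"
    and hOp: "hermitian_mat N Op" and Opnz: "Op \<noteq> 0\<^sub>m N N" and sOp: "supp_mat N Op \<subseteq> rng_mat N X"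
    and eqT: "T = adj X * Op * X"
  shows "perturbation C R T"
proof -
  have Xc: "X \<in> carrier_mat N N" using alg_carrier[OF alg X] .
  have hQ: "hermitian_mat N Q" using pQ unfolding psd_def by auto
  have Qc: "Q \<in> carrier_mat N N" and aQ: "adj Q = Q" using hQ unfolding hermitian_mat_def by auto
  have Opc: "Op \<in> carrier_mat N N" using hOp unfolding hermitian_mat_def by auto
  have RA: "R \<in> A'" and pR: "psd N R" and ptR: "ptrace_K dK dH R = K0" using R C by auto
  have Rc: "R \<in> carrier_mat N N" using alg_carrier[OF alg RA] .
  have hR: "hermitian_mat N R" using pR unfolding psd_def by auto
  have Tnz: "T \<noteq> 0\<^sub>m N N"
  proof
    assume "T = 0\<^sub>m N N"
    hence "Op = 0\<^sub>m N N" using op_zero[OF hOp sOp Xc] eqT by simp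
    thus False using Opnz by simp
  qed
  have sub: "rng_mat N Op \<subseteq> rng_mat N Q"
    using sOp rX herm_supp_eq_rng[OF hOp] herm_supp_eq_rng[OF hQ] by auto
  obtain Bm where Bmc: "Bm \<in> carrier_mat N N" and OpB: "Op = Q * Bm * Q"
    using op_factor_Q[OF hQ hOp sub] by blast
  obtain \<beta> where b0: "\<beta> \<ge> 0" and bb: "\<forall>w\<in>carrier_vec N. cmod ((Bm *\<^sub>v w) \<bullet>c w) \<le> \<beta> * Re (w \<bullet>c w)"
    using form_bound[OF Bmc] by blast
  obtain \<gamma> where g0: "\<gamma> \<ge> 0" and gb: "\<forall>u\<in>carrier_vec N. Re ((Q *\<^sub>v u) \<bullet>c (Q *\<^sub>v u)) \<le> \<gamma> * Re ((Q *\<^sub>v u) \<bullet>c u)"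
    using psd_Q_bound[OF pQ] by blast
  have bound: "\<bar>Re ((Op *\<^sub>v u) \<bullet>c u)\<bar> \<le> (\<beta> * \<gamma>) * Re ((Q *\<^sub>v u) \<bullet>c u)" if u: "u \<in> carrier_vec N" for u
  proof -
    have Qu: "Q *\<^sub>v u \<in> carrier_vec N" using Qc u by auto
    have "(Op *\<^sub>v u) \<bullet>c u = ((adj Q * Bm * Q) *\<^sub>v u) \<bullet>c u" unfolding OpB aQ ..
    also have "\<dots> = (Bm *\<^sub>v (Q *\<^sub>v u)) \<bullet>c (Q *\<^sub>v u)" by (rule sandwich_ip[OF Qc Bmc u])
    finally have e: "(Op *\<^sub>v u) \<bullet>c u = (Bm *\<^sub>v (Q *\<^sub>v u)) \<bullet>c (Q *\<^sub>v u)" .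
    have "\<bar>Re ((Op *\<^sub>v u) \<bullet>c u)\<bar> \<le> cmod ((Op *\<^sub>v u) \<bullet>c u)" by (rule abs_Re_le_cmod)
    also have "\<dots> \<le> \<beta> * Re ((Q *\<^sub>v u) \<bullet>c (Q *\<^sub>v u))" unfolding e using bb Qu by blast
    also have "\<dots> \<le> \<beta> * (\<gamma> * Re ((Q *\<^sub>v u) \<bullet>c u))" using gb u b0 by (intro mult_left_mono) auto
    finally show ?thesis by (simp add: mult.assoc)
  qed
  define t :: real where "t = 1 / (\<beta> * \<gamma> + 1)"
  have bg0: "\<beta> * \<gamma> \<ge> 0" using b0 g0 by simp
  have t0: "t > 0" unfolding t_def using bg0 by simp
  have tbg: "t * (\<beta> * \<gamma>) \<le> 1" unfolding t_def using bg0 by (simp add: field_simps)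
  let ?c = "complex_of_real t"
  have key: "0 \<le> Re ((R *\<^sub>v v) \<bullet>c v) + s * t * Re ((T *\<^sub>v v) \<bullet>c v)"
    if v: "v \<in> carrier_vec N" and s: "s = 1 \<or> s = -1" for v and s :: real
  proof -
    define u where "u = X *\<^sub>v v"
    have u: "u \<in> carrier_vec N" unfolding u_def using Xc v by auto
    have eR: "(R *\<^sub>v v) \<bullet>c v = (Q *\<^sub>v u) \<bullet>c u" unfolding RQX u_def by (rule sandwich_ip[OF Xc Qc v])
    have eT: "(T *\<^sub>v v) \<bullet>c v = (Op *\<^sub>v u) \<bullet>c u" unfolding eqT u_def by (rule sandwich_ip[OF Xc Opc v])
    define f where "f = Re ((Q *\<^sub>v u) \<bullet>c u)"
    have f0: "0 \<le> f" unfolding f_def using pQ u unfolding psd_def by blast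
    have bd: "\<bar>Re ((Op *\<^sub>v u) \<bullet>c u)\<bar> \<le> (\<beta> * \<gamma>) * f" unfolding f_def by (rule bound[OF u])
    have "\<bar>s * t * Re ((Op *\<^sub>v u) \<bullet>c u)\<bar> = t * \<bar>Re ((Op *\<^sub>v u) \<bullet>c u)\<bar>" using s t0 by (auto simp: abs_mult)
    also have "\<dots> \<le> t * ((\<beta> * \<gamma>) * f)" using bd t0 by (intro mult_left_mono) auto
    also have "\<dots> = (t * (\<beta> * \<gamma>)) * f" by simp
    also have "\<dots> \<le> 1 * f" using tbg f0 by (intro mult_right_mono) auto
    finally have "\<bar>s * t * Re ((Op *\<^sub>v u) \<bullet>c u)\<bar> \<le> f" by simp
    thus ?thesis unfolding eR eT f_def by linarith
  qed
  have Tv: "T *\<^sub>v v \<in> carrier_vec N" if "v \<in> carrier_vec N" for v using T that by auto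
  have psdp: "psd N (R + ?c \<cdot>\<^sub>m T)" unfolding psd_def
  proof (intro conjI ballI)
    show "hermitian_mat N (R + ?c \<cdot>\<^sub>m T)" by (rule herm_add_smult(1)[OF hR hT])
    fix v :: "complex vec" assume v: "v \<in> carrier_vec N"
    have "((R + ?c \<cdot>\<^sub>m T) *\<^sub>v v) \<bullet>c v = (R *\<^sub>v v + ?c \<cdot>\<^sub>v (T *\<^sub>v v)) \<bullet>c v"
      using Rc T v by (simp add: add_mult_distrib_mat_vec[of _ N N] smult_mat_vec)
    also have "\<dots> = (R *\<^sub>v v) \<bullet>c v + ?c * ((T *\<^sub>v v) \<bullet>c v)"
      using Rc v Tv[OF v] by (simp add: ip_add_l[of _ N] ip_smult_l[of _ N])
    finally show "0 \<le> Re (((R + ?c \<cdot>\<^sub>m T) *\<^sub>v v) \<bullet>c v)" using key[OF v, of 1] by simp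
  qed
  have psdm: "psd N (R - ?c \<cdot>\<^sub>m T)" unfolding psd_def
  proof (intro conjI ballI)
    show "hermitian_mat N (R - ?c \<cdot>\<^sub>m T)" by (rule herm_add_smult(2)[OF hR hT])
    fix v :: "complex vec" assume v: "v \<in> carrier_vec N"
    have "((R - ?c \<cdot>\<^sub>m T) *\<^sub>v v) \<bullet>c v = (R *\<^sub>v v - ?c \<cdot>\<^sub>v (T *\<^sub>v v)) \<bullet>c v"
      using Rc T v by (simp add: minus_mult_distrib_mat_vec[of _ N N] smult_mat_vec)
    also have "\<dots> = (R *\<^sub>v v) \<bullet>c v - ?c * ((T *\<^sub>v v) \<bullet>c v)"
      using Rc v Tv[OF v] by (simp add: ip_minus_l[of _ N] ip_smult_l[of _ N])
    finally show "0 \<le> Re (((R - ?c \<cdot>\<^sub>m T) *\<^sub>v v) \<bullet>c v)" using key[OF v, of "-1"] by simp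
  qed
  have Rc': "R \<in> carrier_mat (dK * dH) (dK * dH)" and T': "T \<in> carrier_mat (dK * dH) (dK * dH)"
    using Rc T Nd by auto
  have K0c: "K0 \<in> carrier_mat dH dH" using ptR unfolding ptrace_K_def by auto
  have ptp: "ptrace_K dK dH (R + ?c \<cdot>\<^sub>m T) = K0"
    unfolding ptrace_add_smult[OF Rc' T'] ptR ptT using K0c by simp
  have ptm: "ptrace_K dK dH (R - ?c \<cdot>\<^sub>m T) = K0"
    unfolding ptrace_minus_smult[OF Rc' T'] ptR ptT using K0c by (intro eq_matI) auto
  have Ap: "R + ?c \<cdot>\<^sub>m T \<in> A'" by (rule alg_add[OF alg RA alg_smult[OF alg TA]])
  have Am: "R - ?c \<cdot>\<^sub>m T \<in> A'" by (rule alg_minus[OF alg RA alg_smult[OF alg TA]])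
  show ?thesis unfolding perturbation_def
    using Tnz T t0 psdp psdm ptp ptm Ap Am C by auto
qed


lemma conj_block:
  assumes W: "unitary_mat N W" and B: "B \<in> carrier_mat N N" and J: "J \<in> carrier_mat N m"
    and M: "M \<in> carrier_mat m m" and BJ: "B * J = J * M"
  shows "(W * B * adj W) * (W * J) = (W * J) * M"
proof -
  have Wc: "W \<in> carrier_mat N N" and WW: "adj W * W = 1\<^sub>m N" using W unfolding unitary_mat_def by auto
  have aW: "adj W \<in> carrier_mat N N" using Wc by simp
  have "(W * B * adj W) * (W * J) = W * B * (adj W * (W * J))"
    by (rule assoc_mult_mat) (use Wc B aW J in auto)
  also have "adj W * (W * J) = (adj W * W) * J" by (rule assoc_mult_mat[symmetric]) (use Wc aW J in auto)
  also have "\<dots> = J" unfolding WW using J by simp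
  also have "W * B * J = W * (B * J)" by (rule assoc_mult_mat) (use Wc B J in auto)
  also have "\<dots> = W * (J * M)" unfolding BJ ..
  also have "\<dots> = W * J * M" by (rule assoc_mult_mat[symmetric]) (use Wc J M in auto)
  finally show ?thesis .
qed

lemma adj_conj:
  assumes Wc: "W \<in> carrier_mat N N" and B: "B \<in> carrier_mat N N"
  shows "adj (W * B * adj W) = W * adj B * adj W"
proof -
  have aW: "adj W \<in> carrier_mat N N" using Wc by simp
  have "adj (W * B * adj W) = adj (adj W) * adj (W * B)" by (rule adj_mult) (use Wc B aW in auto)
  also have "adj (W * B) = adj B * adj W" by (rule adj_mult[OF Wc B])
  also have "adj (adj W) * (adj B * adj W) = W * adj B * adj W"
    by (simp, rule assoc_mult_mat[symmetric]) (use Wc B aW in auto)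
  finally show ?thesis .
qed

lemma part2:
  assumes W: "unitary_mat N W" and SN: "sum_list (bsizes ds ms) = N"
    and dpos: "\<forall>k<length ds. ds ! k > 0"
    and okO: "okMs ds ms Os" and okX: "okMs ds ms Xs"
    and OpE: "Op = W * block_op ds Os * adj W" and XE: "X = W * block_op ds Xs * adj W"
    and hOp: "hermitian_mat N Op" and sOp: "supp_mat N Op \<subseteq> rng_mat N X" and k: "k < length ds"
  shows "supp_mat (ms ! k) (Os ! k) \<subseteq> rng_mat (ms ! k) (Xs ! k)"
proof -
  let ?m = "ms ! k"
  let ?off = "sum_list (take k (bsizes ds ms))"
  define J where "J = injm N ?m ?off"
  define F where "F = W * J"
  have Wc: "W \<in> carrier_mat N N" and WW: "adj W * W = 1\<^sub>m N" using W unfolding unitary_mat_def by auto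
  have aW: "adj W \<in> carrier_mat N N" using Wc by simp
  have Jc: "J \<in> carrier_mat N ?m" unfolding J_def by simp
  have Fc: "F \<in> carrier_mat N ?m" unfolding F_def using Wc Jc by auto
  have aFc: "adj F \<in> carrier_mat ?m N" using Fc by simp
  have Bo: "block_op ds Os \<in> carrier_mat N N" using block_op_carrier[OF okO] SN by simp
  have Bx: "block_op ds Xs \<in> carrier_mat N N" using block_op_carrier[OF okX] SN by simp
  have Ok: "Os ! k \<in> carrier_mat ?m ?m" using okO k unfolding okMs_def by auto
  have Xk: "Xs ! k \<in> carrier_mat ?m ?m" using okX k unfolding okMs_def by auto
  have lb: "length (bsizes ds ms) = length ds" unfolding bsizes_def by simp
  have bk: "bsizes ds ms ! k = ds ! k * ?m" using k unfolding bsizes_def by simp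
  have offS: "?off + ds ! k * ?m \<le> N" using sum_list_take_nth[of k "bsizes ds ms"] k lb bk SN by simp
  have "ds ! k > 0" using dpos k by simp
  hence "?m \<le> ds ! k * ?m" by simp
  hence offm: "?off + ?m \<le> N" using offS by linarith
  have JJ: "adj J * J = 1\<^sub>m ?m" unfolding J_def by (rule adj_injm[OF offm])
  have FF: "adj F * F = 1\<^sub>m ?m"
  proof -
    have "adj F = adj J * adj W" unfolding F_def by (rule adj_mult[OF Wc Jc])
    hence "adj F * F = adj J * adj W * (W * J)" unfolding F_def by simp
    also have "\<dots> = adj J * (adj W * (W * J))" by (rule assoc_mult_mat) (use Jc aW Wc in auto)
    also have "adj W * (W * J) = (adj W * W) * J" by (rule assoc_mult_mat[symmetric]) (use aW Wc Jc in auto)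
    also have "\<dots> = J" unfolding WW using Jc by simp
    finally show ?thesis using JJ by simp
  qed
  have BoJ: "block_op ds Os * J = J * Os ! k" unfolding J_def SN[symmetric]
    by (rule block_op_injm[OF okO k]) (use dpos k in auto)
  have BxJ: "block_op ds (map adj Xs) * J = J * adj (Xs ! k)"
  proof -
    have "block_op ds (map adj Xs) * J = J * (map adj Xs) ! k" unfolding J_def SN[symmetric]
      by (rule block_op_injm[OF okMs_adj[OF okX] k]) (use dpos k in auto)
    thus ?thesis using okX k unfolding okMs_def by simp
  qed
  have OpF: "Op * F = F * Os ! k" unfolding OpE F_def by (rule conj_block[OF W Bo Jc Ok BoJ])
  have aX: "adj X = W * block_op ds (map adj Xs) * adj W"
    unfolding XE adj_conj[OF Wc Bx] adj_block_op[OF okX] ..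
  have Bax: "block_op ds (map adj Xs) \<in> carrier_mat N N" using block_op_carrier[OF okMs_adj[OF okX]] SN by simp
  have aXF: "adj X * F = F * adj (Xs ! k)" unfolding aX F_def
    by (rule conj_block[OF W Bax Jc _ BxJ]) (use Xk in simp)
  have Opc: "Op \<in> carrier_mat N N" and aOp: "adj Op = Op" using hOp unfolding hermitian_mat_def by auto
  have Xc: "X \<in> carrier_mat N N" unfolding XE using Wc Bx by auto
  have FOp: "adj F * Op = Os ! k * adj F"
  proof -
    have "adj (Op * F) = adj F * adj Op" by (rule adj_mult[OF Opc Fc])
    moreover have "adj (F * Os ! k) = adj (Os ! k) * adj F" by (rule adj_mult[OF Fc Ok])
    moreover have "adj F * (Op * F) = Os ! k"
    proof -
      have "adj F * (F * Os ! k) = (adj F * F) * Os ! k" by (rule assoc_mult_mat[symmetric]) (use aFc Fc Ok in auto)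
      thus ?thesis unfolding OpF FF using Ok by simp
    qed
    moreover have "adj (Os ! k) = Os ! k"
    proof -
      have "adj (adj F * (Op * F)) = adj (Op * F) * adj (adj F)" by (rule adj_mult) (use aFc Opc Fc in auto)
      also have "adj (Op * F) = adj F * Op" using adj_mult[OF Opc Fc] aOp by simp
      also have "adj F * Op * adj (adj F) = adj F * (Op * F)" by (simp, rule assoc_mult_mat) (use aFc Opc Fc in auto)
      finally show ?thesis using \<open>adj F * (Op * F) = Os ! k\<close> by simp
    qed
    ultimately show ?thesis using aOp OpF by simp
  qed
  have XkF: "adj F * X = Xs ! k * adj F"
  proof -
    have "adj (adj X * F) = adj F * adj (adj X)" by (rule adj_mult) (use Xc Fc in auto)
    moreover have "adj (F * adj (Xs ! k)) = adj (adj (Xs ! k)) * adj F" by (rule adj_mult) (use Fc Xk in auto)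
    ultimately show ?thesis using aXF by simp
  qed
  show ?thesis
  proof
    fix v assume vs: "v \<in> supp_mat ?m (Os ! k)"
    hence v: "v \<in> carrier_vec ?m" and orth: "\<And>x. x \<in> ker_mat ?m (Os ! k) \<Longrightarrow> v \<bullet>c x = 0"
      unfolding supp_mat_def by auto
    have Fv: "F *\<^sub>v v \<in> carrier_vec N" using Fc v by auto
    have "F *\<^sub>v v \<in> supp_mat N Op" unfolding supp_mat_def
    proof (intro CollectI conjI ballI Fv)
      fix w assume "w \<in> ker_mat N Op"
      hence w: "w \<in> carrier_vec N" and Ow: "Op *\<^sub>v w = 0\<^sub>v N" unfolding ker_mat_def using Opc by auto
      have aFw: "adj F *\<^sub>v w \<in> carrier_vec ?m" using aFc w by auto
      have "Os ! k *\<^sub>v (adj F *\<^sub>v w) = (Os ! k * adj F) *\<^sub>v w"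
        by (rule assoc_mult_mat_vec[symmetric]) (use Ok aFc w in auto)
      also have "\<dots> = (adj F * Op) *\<^sub>v w" unfolding FOp ..
      also have "\<dots> = adj F *\<^sub>v (Op *\<^sub>v w)" by (rule assoc_mult_mat_vec) (use aFc Opc w in auto)
      also have "\<dots> = 0\<^sub>v ?m" unfolding Ow using aFc by simp
      finally have "adj F *\<^sub>v w \<in> ker_mat ?m (Os ! k)" unfolding ker_mat_def using aFw Ok by auto
      hence "v \<bullet>c (adj F *\<^sub>v w) = 0" by (rule orth)
      thus "(F *\<^sub>v v) \<bullet>c w = 0" using ip_adj[OF Fc v w] by simp
    qed
    hence "F *\<^sub>v v \<in> rng_mat N X" using sOp by auto
    then obtain z where z: "z \<in> carrier_vec N" and ez: "F *\<^sub>v v = X *\<^sub>v z" unfolding rng_mat_def by auto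
    have "v = (adj F * F) *\<^sub>v v" unfolding FF using v by simp
    also have "\<dots> = adj F *\<^sub>v (F *\<^sub>v v)" by (rule assoc_mult_mat_vec) (use aFc Fc v in auto)
    also have "\<dots> = (adj F * X) *\<^sub>v z" unfolding ez by (rule assoc_mult_mat_vec[symmetric]) (use aFc Xc z in auto)
    also have "\<dots> = (Xs ! k * adj F) *\<^sub>v z" unfolding XkF ..
    also have "\<dots> = Xs ! k *\<^sub>v (adj F *\<^sub>v z)" by (rule assoc_mult_mat_vec) (use Xk aFc z in auto)
    finally show "v \<in> rng_mat ?m (Xs ! k)" unfolding rng_mat_def using aFc z by auto
  qed
qed


theorem theorem4:
  fixes G :: "('g, 'b) monoid_scheme"
    and dH dK :: nat
    and U V :: "'g \<Rightarrow> complex mat"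
    and K0 R Q X W :: "complex mat"
    and ds ms :: "nat list"
    and P :: "nat \<Rightarrow> 'g \<Rightarrow> complex mat"
  defines "N \<equiv> dK * dH"
    and "A' \<equiv> commutant G dK dH V U"
    and "C \<equiv> C_set G dK dH V U K0"
  assumes grp: "group G"
    and repU: "unitary_rep G dH U"
    and repV: "unitary_rep G dK V"
    (* decomposition of K (x) H into isotypic components H_k (x) C^{m_k} *)
    and len: "length ms = length ds"
    and mult_pos: "\<forall>k < length ds. ms ! k > 0"
    and irr: "\<forall>k < length ds. irreducible_rep G (ds ! k) (P k)"
    and ineq: "\<forall>k < length ds. \<forall>l < length ds. k \<noteq> l \<longrightarrow>
                 \<not> equivalent_rep G (ds ! k) (P k) (ds ! l) (P l)"
    and W_unit: "unitary_mat N W"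
    and W_dec: "\<forall>g \<in> carrier G. adj W * kron (V g) (cconj (U g)) * W =
                  diag_block_mat (map (\<lambda>k. kron (P k g) (1\<^sub>m (ms ! k))) [0..<length ds])"
    (* the stated structure of the commutant *)
    and comm_char: "A' = {W * block_op ds Ms * adj W | Ms. length Ms = length ds \<and>
                      (\<forall>k < length ds. Ms ! k \<in> carrier_mat (ms ! k) (ms ! k))}"
    (* K0 and R *)
    and K0: "psd dH K0" "psd dH (1\<^sub>m dH - K0)"
    and R: "R \<in> C"
    and QX: "Q \<in> A'" "X \<in> A'" "psd N Q" "rng_mat N X = supp_mat N Q"
    and RQX: "R = adj X * Q * X"
  shows "(\<forall>T \<in> carrier_mat N N. perturbation C R T \<longleftrightarrow>
            (hermitian_mat N T \<and> T \<in> A' \<and> ptrace_K dK dH T = 0\<^sub>m dH dH \<and>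
             (\<exists>Op. hermitian_mat N Op \<and> Op \<in> A' \<and> Op \<noteq> 0\<^sub>m N N \<and>
                  supp_mat N Op \<subseteq> rng_mat N X \<and> T = adj X * Op * X)))
       \<and> (\<forall>Op Xs. hermitian_mat N Op \<and> Op \<in> A' \<and> Op \<noteq> 0\<^sub>m N N \<and> supp_mat N Op \<subseteq> rng_mat N X
             \<and> length Xs = length ds \<and> (\<forall>k < length ds. Xs ! k \<in> carrier_mat (ms ! k) (ms ! k))
             \<and> X = W * block_op ds Xs * adj W
           \<longrightarrow> (\<exists>Os. length Os = length ds \<and>
                  (\<forall>k < length ds. Os ! k \<in> carrier_mat (ms ! k) (ms ! k)) \<and>
                  Op = W * block_op ds Os * adj W \<and>
                  (\<forall>k < length ds. supp_mat (ms ! k) (Os ! k) \<subseteq> rng_mat (ms ! k) (Xs ! k))))"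
proof -
  have Nd: "N = dK * dH" using \<open>N \<equiv> dK * dH\<close> by simp
  have A'd: "A' = commutant G dK dH V U" using \<open>A' \<equiv> commutant G dK dH V U\<close> by simp
  have Cd: "C = C_set G dK dH V U K0" using \<open>C \<equiv> C_set G dK dH V U K0\<close> by simp
  have Wc: "W \<in> carrier_mat N N" using W_unit unfolding unitary_mat_def by auto
  have dpos: "\<forall>k<length ds. ds ! k > 0" using irr unfolding irreducible_rep_def by auto
  have SN: "sum_list (bsizes ds ms) = N"
  proof -
    have g: "\<one>\<^bsub>G\<^esub> \<in> carrier G" using grp by (simp add: group.is_monoid monoid.one_closed)
    let ?g = "\<one>\<^bsub>G\<^esub>"
    have K: "kron (V ?g) (cconj (U ?g)) \<in> carrier_mat N N" unfolding Nd by (rule K_carrier[OF repU repV g])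
    have "adj W * kron (V ?g) (cconj (U ?g)) * W \<in> carrier_mat N N" using Wc K by auto
    hence "dim_row (diag_block_mat (map (\<lambda>k. kron (P k ?g) (1\<^sub>m (ms ! k))) [0..<length ds])) = N"
      using W_dec g by auto
    moreover have "map dim_row (map (\<lambda>k. kron (P k ?g) (1\<^sub>m (ms ! k))) [0..<length ds]) = bsizes ds ms"
    proof -
      have "dim_row (P k ?g) = ds ! k" if "k < length ds" for k
        using irr that g unfolding irreducible_rep_def unitary_rep_def unitary_mat_def carrier_mat_def by auto
      thus ?thesis unfolding bsizes_def by auto
    qed
    ultimately show ?thesis by (simp add: dim_diag_block_mat)
  qed
  have ccA: "M \<in> A' \<longleftrightarrow> (\<exists>Ms. M = W * block_op ds Ms * adj W \<and> okMs ds ms Ms)" for M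
    using comm_char unfolding okMs_def by blast
  have alg: "alg_ok N A'"
    unfolding alg_ok_def
  proof (intro conjI ballI allI impI)
    show "A' \<subseteq> carrier_mat N N" unfolding A'd Nd using comm_carrier by blast
    fix X Y assume X: "X \<in> A'" and Y: "Y \<in> A'"
    show "X + Y \<in> A'" using X Y unfolding A'd by (rule comm_add[OF repU repV])
    show "X - Y \<in> A'" using X Y unfolding A'd by (rule comm_minus[OF repU repV])
    show "X * Y \<in> A'" using X Y unfolding A'd by (rule comm_mult[OF repU repV])
  next
    fix X c assume X: "X \<in> A'"
    show "c \<cdot>\<^sub>m X \<in> A'" using X unfolding A'd by (rule comm_smult[OF repU repV])
  next
    fix X assume X: "X \<in> A'"
    then obtain Ms where XE: "X = W * block_op ds Ms * adj W" and ok: "okMs ds ms Ms" using ccA by blast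
    have B: "block_op ds Ms \<in> carrier_mat N N" using block_op_carrier[OF ok] SN by simp
    have "adj X = W * block_op ds (map adj Ms) * adj W"
      unfolding XE adj_conj[OF Wc B] adj_block_op[OF ok] ..
    thus "adj X \<in> A'" using ccA okMs_adj[OF ok] by blast
  next
    fix H assume H: "H \<in> A'" and hH: "hermitian_mat N H"
    show "\<exists>Y\<in>A'. H * Y * H = H \<and> H * Y = Y * H"
      using comm_ginv[OF repU repV, of H] H hH unfolding A'd Nd by blast
  qed
  have Cdef: "C = {R \<in> A'. psd N R \<and> ptrace_K dK dH R = K0}"
    unfolding Cd C_set_def A'd Nd ..
  have part1: "\<forall>T \<in> carrier_mat N N. perturbation C R T \<longleftrightarrow>
            (hermitian_mat N T \<and> T \<in> A' \<and> ptrace_K dK dH T = 0\<^sub>m dH dH \<and>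
             (\<exists>Op. hermitian_mat N Op \<and> Op \<in> A' \<and> Op \<noteq> 0\<^sub>m N N \<and>
                  supp_mat N Op \<subseteq> rng_mat N X \<and> T = adj X * Op * X))"
  proof (intro ballI iffI)
    fix T assume T: "T \<in> carrier_mat N N" and pert: "perturbation C R T"
    show "hermitian_mat N T \<and> T \<in> A' \<and> ptrace_K dK dH T = 0\<^sub>m dH dH \<and>
             (\<exists>Op. hermitian_mat N Op \<and> Op \<in> A' \<and> Op \<noteq> 0\<^sub>m N N \<and>
                  supp_mat N Op \<subseteq> rng_mat N X \<and> T = adj X * Op * X)"
      by (rule part1_fwd[OF alg Nd Cdef R QX(2) QX(1) RQX T pert])
  next
    fix T assume T: "T \<in> carrier_mat N N" and rhs: "hermitian_mat N T \<and> T \<in> A' \<and> ptrace_K dK dH T = 0\<^sub>m dH dH \<and>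
             (\<exists>Op. hermitian_mat N Op \<and> Op \<in> A' \<and> Op \<noteq> 0\<^sub>m N N \<and>
                  supp_mat N Op \<subseteq> rng_mat N X \<and> T = adj X * Op * X)"
    then obtain Op where hT: "hermitian_mat N T" and TA: "T \<in> A'" and ptT: "ptrace_K dK dH T = 0\<^sub>m dH dH"
      and hOp: "hermitian_mat N Op" and Opnz: "Op \<noteq> 0\<^sub>m N N" and sOp: "supp_mat N Op \<subseteq> rng_mat N X"
      and eqT: "T = adj X * Op * X" by blast
    show "perturbation C R T"
      by (rule part1_bwd[OF alg Nd Cdef R QX(2) QX(3) QX(4) RQX T hT TA ptT hOp Opnz sOp eqT])
  qed
  have part2: "\<forall>Op Xs. hermitian_mat N Op \<and> Op \<in> A' \<and> Op \<noteq> 0\<^sub>m N N \<and> supp_mat N Op \<subseteq> rng_mat N X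
             \<and> length Xs = length ds \<and> (\<forall>k < length ds. Xs ! k \<in> carrier_mat (ms ! k) (ms ! k))
             \<and> X = W * block_op ds Xs * adj W
           \<longrightarrow> (\<exists>Os. length Os = length ds \<and>
                  (\<forall>k < length ds. Os ! k \<in> carrier_mat (ms ! k) (ms ! k)) \<and>
                  Op = W * block_op ds Os * adj W \<and>
                  (\<forall>k < length ds. supp_mat (ms ! k) (Os ! k) \<subseteq> rng_mat (ms ! k) (Xs ! k)))"
  proof (intro allI impI)
    fix Op Xs assume a: "hermitian_mat N Op \<and> Op \<in> A' \<and> Op \<noteq> 0\<^sub>m N N \<and> supp_mat N Op \<subseteq> rng_mat N X
             \<and> length Xs = length ds \<and> (\<forall>k < length ds. Xs ! k \<in> carrier_mat (ms ! k) (ms ! k))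
             \<and> X = W * block_op ds Xs * adj W"
    hence hOp: "hermitian_mat N Op" and OpA: "Op \<in> A'" and sOp: "supp_mat N Op \<subseteq> rng_mat N X"
      and okX: "okMs ds ms Xs" and XE: "X = W * block_op ds Xs * adj W"
      unfolding okMs_def by auto
    obtain Os where OpE: "Op = W * block_op ds Os * adj W" and okO: "okMs ds ms Os" using ccA OpA by blast
    have "\<forall>k < length ds. supp_mat (ms ! k) (Os ! k) \<subseteq> rng_mat (ms ! k) (Xs ! k)"
      using part2[OF W_unit SN dpos okO okX OpE XE hOp sOp] by blast
    thus "\<exists>Os. length Os = length ds \<and>
                  (\<forall>k < length ds. Os ! k \<in> carrier_mat (ms ! k) (ms ! k)) \<and>
                  Op = W * block_op ds Os * adj W \<and>
                  (\<forall>k < length ds. supp_mat (ms ! k) (Os ! k) \<subseteq> rng_mat (ms ! k) (Xs ! k))"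
      using OpE okO unfolding okMs_def by blast
  qed
  show ?thesis using part1 part2 by blast
qed

end
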